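(* Let $\mathtt{A}$ be the set-theoretic operad generated by a binary generator $C$ with the symmetry $C_{a,b}=C_{b,a}$ and a binary generator $D$ with no symmetry, subject to the relations (where $*$ denotes a composition slot) $$D_{*,1}\circ_* D_{3,2}=D_{*,2}\circ_* D_{3,1}=D_{3,*}\circ_* C_{1,2},\qquad C_{*,1}\circ_* C_{2,3}=C_{*,2}\circ_* C_{3,1}.$$ Then the unique operad morphism $\phi:\mathtt{A}\to\operatorname{Arb}$ with $\phi(C_{1,2})=[1][2]$ and $\phi(D_{1,2})=[1\triangleleft 2]$ is an isomorphism. In other words, $\operatorname{Arb}$ is generated by $[1][2]$ and $[1\triangleleft 2]$ subject only to the relations $[*\triangleleft 1]\circ_*[3\triangleleft 2]=[*\triangleleft 2]\circ_*[3\triangleleft 1]=[3\triangleleft *]\circ_*[1][2]$ and $[*][1]\circ_*[2][3]=[*][2]\circ_*[3][1]$.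
   Context: A shrub $P$ on a finite set $I$ is a set $E$ of edges (unordered pairs of distinct elements of $I$) with a height function $h_P:I\to\mathbb{N}$; $j$ covers $i$ if $\{i,j\}\in E$ and $h_P(j)=h_P(i)+1$. Axioms: (1) edges join vertices whose heights differ by $1$; (2) every vertex of positive height covers some vertex; (3) no four distinct $a,b,c,d$ with $a$ covering $b$ and $c$, $c$ covering $d$, $\{b,d\}\notin E$; (4) no five distinct $a,b,c,d,e$ with $a$ covering $c,d$, $b$ covering $d,e$, $\{a,e\}\notin E$, $\{b,c\}\notin E$. $\operatorname{Arb}$ is the set-theoretic operad with $\operatorname{Arb}(I)$ the set of shrubs on $I$, relabelling action, unit the one-vertex shrub, and composition $P\circ_i P'$ (for $i\in I$, $P'$ on $I'$) defined as the shrub on $(I\setminus\{i\})\sqcup I'$ with height $h_P$ on $I\setminus\{i\}$ and $h_{P'}+h_P(i)$ on $I'$, whose edges are the edges of $P$ not containing $i$, the edges of $P'$, and all pairs $\{j,k\}$ with $j$ adjacent to $i$ in $P$ and $k$ of height $0$ in $P'$. Notation: $[a][b]$ is the shrub on $\{a,b\}$ with no edge (both of height $0$); $[a\triangleleft b]$ is the shrub on $\{a,b\}$ with the edge $\{a,b\}$, $h(a)=0$, $h(b)=1$. $C_{a,b}$, $D_{a,b}$ denote the generators with inputs labelled $a,b$. *)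

theory Defs
  imports Main
begin

text \<open>A shrub on a finite label set I is represented by its edge set E (a set of
unordered pairs, i.e. 2-element sets) and its height function h, normalised to be 0
outside I.\<close>

definition covers :: "'a set set \<Rightarrow> ('a \<Rightarrow> nat) \<Rightarrow> 'a \<Rightarrow> 'a \<Rightarrow> bool" where
  "covers E h j i \<longleftrightarrow> {i, j} \<in> E \<and> h j = h i + 1"

definition is_shrub :: "'a set \<Rightarrow> 'a set set \<Rightarrow> ('a \<Rightarrow> nat) \<Rightarrow> bool" where
  "is_shrub I E h \<longleftrightarrow>
     (\<forall>e\<in>E. \<exists>i j. e = {i, j} \<and> i \<noteq> j \<and> i \<in> I \<and> j \<in> I) \<and>
     (\<forall>x. x \<notin> I \<longrightarrow> h x = 0) \<and>
     (\<forall>i j. {i, j} \<in> E \<longrightarrow> h i = h j + 1 \<or> h j = h i + 1) \<and>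
     (\<forall>a\<in>I. 0 < h a \<longrightarrow> (\<exists>b. covers E h a b)) \<and>
     \<not> (\<exists>a b c d. distinct [a, b, c, d] \<and> covers E h a b \<and> covers E h a c \<and>
            covers E h c d \<and> {b, d} \<notin> E) \<and>
     \<not> (\<exists>a b c d e. distinct [a, b, c, d, e] \<and> covers E h a c \<and> covers E h a d \<and>
            covers E h b d \<and> covers E h b e \<and> {a, e} \<notin> E \<and> {b, c} \<notin> E)"

datatype 'a tm = Leaf 'a | C "'a tm" "'a tm" | D "'a tm" "'a tm"

fun leaves :: "'a tm \<Rightarrow> 'a set" where
  "leaves (Leaf a) = {a}"
| "leaves (C x y) = leaves x \<union> leaves y"
| "leaves (D x y) = leaves x \<union> leaves y"

text \<open>Linear terms: every label occurs at most once (elements of arity leaves t).\<close>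
fun linear :: "'a tm \<Rightarrow> bool" where
  "linear (Leaf a) = True"
| "linear (C x y) = (linear x \<and> linear y \<and> leaves x \<inter> leaves y = {})"
| "linear (D x y) = (linear x \<and> linear y \<and> leaves x \<inter> leaves y = {})"

text \<open>Subtrees are arbitrary (closure under operadic composition), and the relation is
  a congruence for the tree constructors.\<close>
inductive eqA :: "'a tm \<Rightarrow> 'a tm \<Rightarrow> bool" where
  eq_refl: "eqA t t"
| eq_sym: "eqA s t \<Longrightarrow> eqA t s"
| eq_trans: "eqA s t \<Longrightarrow> eqA t u \<Longrightarrow> eqA s u"
| eq_C1: "eqA x x' \<Longrightarrow> eqA (C x y) (C x' y)"
| eq_C2: "eqA y y' \<Longrightarrow> eqA (C x y) (C x y')"
| eq_D1: "eqA x x' \<Longrightarrow> eqA (D x y) (D x' y)"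
| eq_D2: "eqA y y' \<Longrightarrow> eqA (D x y) (D x y')"
| eq_Csym: "eqA (C x y) (C y x)"
| eq_rel1: "eqA (D (D x y) z) (D (D x z) y)"
| eq_rel2: "eqA (D (D x y) z) (D x (C z y))"
| eq_rel3: "eqA (C (C x y) z) (C (C y z) x)"

text \<open>phi(Leaf a) is the one-vertex shrub; phi(C x y) = [a][b] \<circ>_a phi x \<circ>_b phi y and
  phi(D x y) = [a \<triangleleft> b] \<circ>_a phi x \<circ>_b phi y, written out via the composition of Arb.\<close>
fun phi :: "'a tm \<Rightarrow> 'a set set \<times> ('a \<Rightarrow> nat)" where
  "phi (Leaf a) = ({}, (\<lambda>_. 0))"
| "phi (C x y) = (let (Ex, hx) = phi x; (Ey, hy) = phi y in
     (Ex \<union> Ey, (\<lambda>i. if i \<in> leaves y then hy i else hx i)))"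
| "phi (D x y) = (let (Ex, hx) = phi x; (Ey, hy) = phi y in
     (Ex \<union> Ey \<union> {{j, k} | j k. j \<in> leaves y \<and> hy j = 0 \<and> k \<in> leaves x \<and> hx k = 0},
      (\<lambda>i. if i \<in> leaves y then hy i + 1 else hx i)))"

end

theory Submission
  imports Defs
begin


abbreviation PE :: "'a tm \<Rightarrow> 'a set set" where "PE t \<equiv> fst (phi t)"
abbreviation PH :: "'a tm \<Rightarrow> 'a \<Rightarrow> nat" where "PH t \<equiv> snd (phi t)"

lemma PE_Leaf[simp]: "PE (Leaf a) = {}" by simp
lemma PH_Leaf[simp]: "PH (Leaf a) = (\<lambda>_. 0)" by simp
lemma PE_C[simp]: "PE (C x y) = PE x \<union> PE y"
  by (simp add: split_def Let_def)
lemma PH_C[simp]: "PH (C x y) = (\<lambda>i. if i \<in> leaves y then PH y i else PH x i)"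
  by (simp add: split_def Let_def)
lemma PE_D[simp]: "PE (D x y) = PE x \<union> PE y \<union> {{j, k} | j k. j \<in> leaves y \<and> PH y j = 0 \<and> k \<in> leaves x \<and> PH x k = 0}"
  by (simp add: split_def Let_def)
lemma PH_D[simp]: "PH (D x y) = (\<lambda>i. if i \<in> leaves y then PH y i + 1 else PH x i)"
  by (simp add: split_def Let_def)

lemma phi_eq: "phi t = (PE t, PH t)" by simp
declare phi.simps(2,3)[simp del]

lemma finite_leaves[simp]: "finite (leaves t)" by (induction t) auto
lemma leaves_ne[simp]: "leaves t \<noteq> {}" by (induction t) auto

lemma PH_out: "i \<notin> leaves t \<Longrightarrow> PH t i = 0"
  by (induction t) auto

lemma root_ex: "linear t \<Longrightarrow> \<exists>k\<in>leaves t. PH t k = 0"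
  by (induction t) auto

lemma PE_sub: "linear t \<Longrightarrow> e \<in> PE t \<Longrightarrow> \<exists>i j. e = {i,j} \<and> i \<noteq> j \<and> i \<in> leaves t \<and> j \<in> leaves t"
proof (induction t arbitrary: e)
  case (Leaf x) then show ?case by simp
next
  case (C x y) then show ?case by (auto; metis)
next
  case (D x y) then show ?case by auto blast+
qed



lemma doubleton_eq: "{a,b} = {c,d} \<longleftrightarrow> (a = c \<and> b = d) \<or> (a = d \<and> b = c)"
  by (rule doubleton_eq_iff)

lemma is_shrubI:
  assumes "\<And>e. e \<in> E \<Longrightarrow> \<exists>i j. e = {i, j} \<and> i \<noteq> j \<and> i \<in> I \<and> j \<in> I"
    and "\<And>x. x \<notin> I \<Longrightarrow> h x = 0"
    and "\<And>i j. {i, j} \<in> E \<Longrightarrow> h i = h j + 1 \<or> h j = h i + 1"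
    and "\<And>a. a \<in> I \<Longrightarrow> 0 < h a \<Longrightarrow> \<exists>b. covers E h a b"
    and "\<And>a b c d. distinct [a, b, c, d] \<Longrightarrow> covers E h a b \<Longrightarrow> covers E h a c \<Longrightarrow>
            covers E h c d \<Longrightarrow> {b, d} \<in> E"
    and "\<And>a b c d e. distinct [a, b, c, d, e] \<Longrightarrow> covers E h a c \<Longrightarrow> covers E h a d \<Longrightarrow>
            covers E h b d \<Longrightarrow> covers E h b e \<Longrightarrow> {a, e} \<notin> E \<Longrightarrow> {b, c} \<in> E"
  shows "is_shrub I E h"
  unfolding is_shrub_def
proof (intro conjI)
  show "\<not> (\<exists>a b c d. distinct [a, b, c, d] \<and> covers E h a b \<and> covers E h a c \<and>
            covers E h c d \<and> {b, d} \<notin> E)" using assms(5) by blast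
  show "\<not> (\<exists>a b c d e. distinct [a, b, c, d, e] \<and> covers E h a c \<and> covers E h a d \<and>
            covers E h b d \<and> covers E h b e \<and> {a, e} \<notin> E \<and> {b, c} \<notin> E)" using assms(6) by blast
qed (use assms(1-4) in blast)+

lemma
  assumes "is_shrub I E h"
  shows sh_edge: "e \<in> E \<Longrightarrow> \<exists>i j. e = {i, j} \<and> i \<noteq> j \<and> i \<in> I \<and> j \<in> I"
    and sh_out: "x \<notin> I \<Longrightarrow> h x = 0"
    and sh_ht: "{i, j} \<in> E \<Longrightarrow> h i = h j + 1 \<or> h j = h i + 1"
    and sh_cov: "a \<in> I \<Longrightarrow> 0 < h a \<Longrightarrow> \<exists>b. covers E h a b"
    and sh_ax3: "distinct [a, b, c, d] \<Longrightarrow> covers E h a b \<Longrightarrow> covers E h a c \<Longrightarrow>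
            covers E h c d \<Longrightarrow> {b, d} \<in> E"
    and sh_ax4: "distinct [a, b, c, d, f] \<Longrightarrow> covers E h a c \<Longrightarrow> covers E h a d \<Longrightarrow>
            covers E h b d \<Longrightarrow> covers E h b f \<Longrightarrow> {a, f} \<notin> E \<Longrightarrow> {b, c} \<in> E"
  using assms unfolding is_shrub_def by (meson)+

lemma sh_edge2: "is_shrub I E h \<Longrightarrow> {i, j} \<in> E \<Longrightarrow> i \<in> I \<and> j \<in> I \<and> i \<noteq> j"
  by (drule (1) sh_edge) (auto simp: doubleton_eq)

lemma sh_covers_in: "is_shrub I E h \<Longrightarrow> covers E h a b \<Longrightarrow> a \<in> I \<and> b \<in> I"
  unfolding covers_def using sh_edge2 by fastforce

lemma shrub_C:
  assumes x: "is_shrub I1 E1 h1" and y: "is_shrub I2 E2 h2" and dj: "I1 \<inter> I2 = {}"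
  shows "is_shrub (I1 \<union> I2) (E1 \<union> E2) (\<lambda>i. if i \<in> I2 then h2 i else h1 i)"
    (is "is_shrub ?I ?E ?h")
proof -
  have ex: "{i,j} \<in> E1 \<Longrightarrow> i \<in> I1 \<and> j \<in> I1 \<and> i \<noteq> j" for i j using sh_edge2[OF x] by blast
  have ey: "{i,j} \<in> E2 \<Longrightarrow> i \<in> I2 \<and> j \<in> I2 \<and> i \<noteq> j" for i j using sh_edge2[OF y] by blast
  have cov: "covers ?E ?h a b \<longleftrightarrow> (a \<in> I1 \<and> b \<in> I1 \<and> covers E1 h1 a b) \<or> (a \<in> I2 \<and> b \<in> I2 \<and> covers E2 h2 a b)" for a b
  proof
    assume "covers ?E ?h a b"
    then have e: "{b,a} \<in> E1 \<or> {b,a} \<in> E2" and hh: "?h a = ?h b + 1" unfolding covers_def by auto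
    show "(a \<in> I1 \<and> b \<in> I1 \<and> covers E1 h1 a b) \<or> (a \<in> I2 \<and> b \<in> I2 \<and> covers E2 h2 a b)"
    proof (cases "{b,a} \<in> E1")
      case True
      then have "a \<in> I1" "b \<in> I1" using ex by blast+
      then have "a \<notin> I2" "b \<notin> I2" using dj by blast+
      then show ?thesis using True hh \<open>a \<in> I1\<close> \<open>b \<in> I1\<close> unfolding covers_def by simp
    next
      case False
      then have "{b,a} \<in> E2" using e by blast
      then have "a \<in> I2" "b \<in> I2" using ey by blast+
      then show ?thesis using \<open>{b,a} \<in> E2\<close> hh unfolding covers_def by simp
    qed
  next
    assume "(a \<in> I1 \<and> b \<in> I1 \<and> covers E1 h1 a b) \<or> (a \<in> I2 \<and> b \<in> I2 \<and> covers E2 h2 a b)"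
    then show "covers ?E ?h a b"
    proof
      assume "a \<in> I1 \<and> b \<in> I1 \<and> covers E1 h1 a b"
      then have "a \<notin> I2" "b \<notin> I2" using dj by blast+
      then show ?thesis using \<open>a \<in> I1 \<and> b \<in> I1 \<and> covers E1 h1 a b\<close> unfolding covers_def by simp
    next
      assume "a \<in> I2 \<and> b \<in> I2 \<and> covers E2 h2 a b"
      then show ?thesis unfolding covers_def by simp
    qed
  qed
  have cov1: "a \<in> I1 \<Longrightarrow> covers ?E ?h a b \<longleftrightarrow> b \<in> I1 \<and> covers E1 h1 a b" for a b
    using cov dj by blast
  have cov2: "a \<in> I2 \<Longrightarrow> covers ?E ?h a b \<longleftrightarrow> b \<in> I2 \<and> covers E2 h2 a b" for a b
    using cov dj by blast
  have covI: "covers ?E ?h a b \<Longrightarrow> a \<in> I1 \<or> a \<in> I2" for a b using cov by blast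
  show ?thesis
  proof (rule is_shrubI)
    fix e assume "e \<in> ?E" then show "\<exists>i j. e = {i, j} \<and> i \<noteq> j \<and> i \<in> ?I \<and> j \<in> ?I"
      using sh_edge[OF x] sh_edge[OF y] by blast
  next
    fix z assume "z \<notin> ?I" then show "?h z = 0" using sh_out[OF x] sh_out[OF y] by auto
  next
    fix i j assume "{i,j} \<in> ?E" then show "?h i = ?h j + 1 \<or> ?h j = ?h i + 1"
    proof
      assume a: "{i,j} \<in> E1"
      then have "i \<notin> I2" "j \<notin> I2" using ex[OF a] dj by blast+
      then show ?thesis using sh_ht[OF x a] by simp
    next
      assume a: "{i,j} \<in> E2"
      then have "i \<in> I2" "j \<in> I2" using ey[OF a] by blast+
      then show ?thesis using sh_ht[OF y a] by simp
    qed
  next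
    fix a assume "a \<in> ?I" "0 < ?h a" then show "\<exists>b. covers ?E ?h a b"
      using sh_cov[OF x, of a] sh_cov[OF y, of a] sh_covers_in[OF x] sh_covers_in[OF y] dj cov
      proof (cases "a \<in> I2")
      case True
      then obtain b where "covers E2 h2 a b" using sh_cov[OF y, of a] \<open>0 < ?h a\<close> by auto
      then show ?thesis using sh_covers_in[OF y] cov by blast
    next
      case False
      then have "a \<in> I1" using \<open>a \<in> ?I\<close> by blast
      then obtain b where "covers E1 h1 a b" using sh_cov[OF x, of a] \<open>0 < ?h a\<close> False by auto
      then show ?thesis using sh_covers_in[OF x] cov by blast
    qed
  next
    fix a b c d assume "distinct [a, b, c, d]" "covers ?E ?h a b" "covers ?E ?h a c" "covers ?E ?h c d"
    note h = this
    show "{b, d} \<in> ?E"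
    proof (cases "a \<in> I1")
      case True
      then have "c \<in> I1" "covers E1 h1 a b" "covers E1 h1 a c" using h cov1 by blast+
      then have "covers E1 h1 c d" using h cov1 by blast
      then show ?thesis using sh_ax3[OF x, of a b c d] h \<open>covers E1 h1 a b\<close> \<open>covers E1 h1 a c\<close> by blast
    next
      case False
      then have a2: "a \<in> I2" using covI h by blast
      then have "c \<in> I2" "covers E2 h2 a b" "covers E2 h2 a c" using h cov2 by blast+
      then have "covers E2 h2 c d" using h cov2 by blast
      then show ?thesis using sh_ax3[OF y, of a b c d] h \<open>covers E2 h2 a b\<close> \<open>covers E2 h2 a c\<close> by blast
    qed
  next
    fix a b c d e assume "distinct [a, b, c, d, e]" "covers ?E ?h a c" "covers ?E ?h a d"
      "covers ?E ?h b d" "covers ?E ?h b e" "{a, e} \<notin> ?E"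
    note h = this
    show "{b, c} \<in> ?E"
    proof (cases "a \<in> I1")
      case True
      then have "d \<in> I1" "covers E1 h1 a c" "covers E1 h1 a d" using h cov1 by blast+
      then have "b \<in> I1" using h covI cov2 dj by blast
      then have "covers E1 h1 b d" "covers E1 h1 b e" using h cov1 by blast+
      moreover have "{a,e} \<notin> E1" using h by blast
      ultimately show ?thesis using sh_ax4[OF x, of a b c d e] h \<open>covers E1 h1 a c\<close> \<open>covers E1 h1 a d\<close> by blast
    next
      case False
      then have a2: "a \<in> I2" using covI h by blast
      then have "d \<in> I2" "covers E2 h2 a c" "covers E2 h2 a d" using h cov2 by blast+
      then have "b \<in> I2" using h covI cov1 dj by blast
      then have "covers E2 h2 b d" "covers E2 h2 b e" using h cov2 by blast+
      moreover have "{a,e} \<notin> E2" using h by blast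
      ultimately show ?thesis using sh_ax4[OF y, of a b c d e] h \<open>covers E2 h2 a c\<close> \<open>covers E2 h2 a d\<close> by blast
    qed
  qed
qed



lemma shrub_D:
  assumes x: "is_shrub I1 E1 h1" and y: "is_shrub I2 E2 h2" and dj: "I1 \<inter> I2 = {}"
    and rt: "\<exists>k\<in>I1. h1 k = 0"
  shows "is_shrub (I1 \<union> I2) (E1 \<union> E2 \<union> {{j, k} | j k. j \<in> I2 \<and> h2 j = 0 \<and> k \<in> I1 \<and> h1 k = 0})
           (\<lambda>i. if i \<in> I2 then h2 i + 1 else h1 i)"
    (is "is_shrub ?I ?E ?h")
proof -
  let ?X = "{{j, k} | j k. j \<in> I2 \<and> h2 j = 0 \<and> k \<in> I1 \<and> h1 k = 0}"
  have ex: "{i,j} \<in> E1 \<Longrightarrow> i \<in> I1 \<and> j \<in> I1 \<and> i \<noteq> j" for i j using sh_edge2[OF x] by blast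
  have ey: "{i,j} \<in> E2 \<Longrightarrow> i \<in> I2 \<and> j \<in> I2 \<and> i \<noteq> j" for i j using sh_edge2[OF y] by blast
  have X: "{i,j} \<in> ?X \<longleftrightarrow> (i \<in> I2 \<and> h2 i = 0 \<and> j \<in> I1 \<and> h1 j = 0) \<or> (j \<in> I2 \<and> h2 j = 0 \<and> i \<in> I1 \<and> h1 i = 0)" for i j
    by (auto simp: doubleton_eq)
  have cov: "covers ?E ?h a b \<longleftrightarrow> (a \<in> I1 \<and> b \<in> I1 \<and> covers E1 h1 a b) \<or> (a \<in> I2 \<and> b \<in> I2 \<and> covers E2 h2 a b)
      \<or> (a \<in> I2 \<and> h2 a = 0 \<and> b \<in> I1 \<and> h1 b = 0)" for a b
  proof
    assume "covers ?E ?h a b"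
    then have e: "{b,a} \<in> E1 \<or> {b,a} \<in> E2 \<or> {b,a} \<in> ?X" and hh: "?h a = ?h b + 1" unfolding covers_def by auto
    show "(a \<in> I1 \<and> b \<in> I1 \<and> covers E1 h1 a b) \<or> (a \<in> I2 \<and> b \<in> I2 \<and> covers E2 h2 a b)
      \<or> (a \<in> I2 \<and> h2 a = 0 \<and> b \<in> I1 \<and> h1 b = 0)"
    proof (cases "{b,a} \<in> E1")
      case True
      then have "a \<in> I1" "b \<in> I1" using ex by blast+
      then have "a \<notin> I2" "b \<notin> I2" using dj by blast+
      then show ?thesis using True hh \<open>a \<in> I1\<close> \<open>b \<in> I1\<close> unfolding covers_def by simp
    next
      case False
      show ?thesis
      proof (cases "{b,a} \<in> E2")
        case True
        then have "a \<in> I2" "b \<in> I2" using ey by blast+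
        then show ?thesis using True hh unfolding covers_def by simp
      next
        case F2: False
        then have "{b,a} \<in> ?X" using e False by blast
        then have "(b \<in> I2 \<and> h2 b = 0 \<and> a \<in> I1 \<and> h1 a = 0) \<or> (a \<in> I2 \<and> h2 a = 0 \<and> b \<in> I1 \<and> h1 b = 0)"
          using X by blast
        then show ?thesis
        proof
          assume H: "b \<in> I2 \<and> h2 b = 0 \<and> a \<in> I1 \<and> h1 a = 0"
          then have "a \<notin> I2" using dj by blast
          then show ?thesis using hh H by simp
        qed blast
      qed
    qed
  next
    assume "(a \<in> I1 \<and> b \<in> I1 \<and> covers E1 h1 a b) \<or> (a \<in> I2 \<and> b \<in> I2 \<and> covers E2 h2 a b)
      \<or> (a \<in> I2 \<and> h2 a = 0 \<and> b \<in> I1 \<and> h1 b = 0)"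
    then show "covers ?E ?h a b"
    proof (elim disjE)
      assume H: "a \<in> I1 \<and> b \<in> I1 \<and> covers E1 h1 a b"
      then have "a \<notin> I2" "b \<notin> I2" using dj by blast+
      then show ?thesis using H unfolding covers_def by simp
    next
      assume "a \<in> I2 \<and> b \<in> I2 \<and> covers E2 h2 a b"
      then show ?thesis unfolding covers_def by simp
    next
      assume H: "a \<in> I2 \<and> h2 a = 0 \<and> b \<in> I1 \<and> h1 b = 0"
      then have "b \<notin> I2" using dj by blast
      moreover have "{b,a} \<in> ?X" using H X by blast
      ultimately show ?thesis using H unfolding covers_def by simp
    qed
  qed
  have cov1: "a \<in> I1 \<Longrightarrow> covers ?E ?h a b \<longleftrightarrow> b \<in> I1 \<and> covers E1 h1 a b" for a b
    using cov dj by blast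
  have cov2: "a \<in> I2 \<Longrightarrow> 0 < h2 a \<Longrightarrow> covers ?E ?h a b \<longleftrightarrow> b \<in> I2 \<and> covers E2 h2 a b" for a b
    using cov dj by auto
  have cov3: "a \<in> I2 \<Longrightarrow> h2 a = 0 \<Longrightarrow> covers ?E ?h a b \<longleftrightarrow> b \<in> I1 \<and> h1 b = 0" for a b
    using cov dj unfolding covers_def[of E2] by auto
  have covI: "covers ?E ?h a b \<Longrightarrow> a \<in> I1 \<or> a \<in> I2" for a b using cov by blast
  have c1h: "covers E1 h1 a b \<Longrightarrow> h1 a = h1 b + 1" for a b unfolding covers_def by simp
  have c2h: "covers E2 h2 a b \<Longrightarrow> h2 a = h2 b + 1" for a b unfolding covers_def by simp
  have Xin: "j \<in> I2 \<Longrightarrow> h2 j = 0 \<Longrightarrow> k \<in> I1 \<Longrightarrow> h1 k = 0 \<Longrightarrow> {j,k} \<in> ?E \<and> {k,j} \<in> ?E" for j k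
    using X by blast
  show ?thesis
  proof (rule is_shrubI)
    fix e assume "e \<in> ?E" then show "\<exists>i j. e = {i, j} \<and> i \<noteq> j \<and> i \<in> ?I \<and> j \<in> ?I"
    proof (elim UnE)
      assume "e \<in> ?X" then show ?thesis using dj by blast
    qed (use sh_edge[OF x] sh_edge[OF y] in blast)+
  next
    fix z assume "z \<notin> ?I" then show "?h z = 0" using sh_out[OF x] sh_out[OF y] by auto
  next
    fix i j assume "{i,j} \<in> ?E" then show "?h i = ?h j + 1 \<or> ?h j = ?h i + 1"
    proof (elim UnE)
      assume a: "{i,j} \<in> E1"
      then have "i \<notin> I2" "j \<notin> I2" using ex[OF a] dj by blast+
      then show ?thesis using sh_ht[OF x a] by simp
    next
      assume a: "{i,j} \<in> E2"
      then have "i \<in> I2" "j \<in> I2" using ey[OF a] by blast+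
      then show ?thesis using sh_ht[OF y a] by simp
    next
      assume "{i,j} \<in> ?X"
      then have "(i \<in> I2 \<and> h2 i = 0 \<and> j \<in> I1 \<and> h1 j = 0) \<or> (j \<in> I2 \<and> h2 j = 0 \<and> i \<in> I1 \<and> h1 i = 0)"
        using X by blast
      then show ?thesis using dj by auto
    qed
  next
    fix a assume aI: "a \<in> ?I" and hp: "0 < ?h a" show "\<exists>b. covers ?E ?h a b"
    proof (cases "a \<in> I2")
      case True
      show ?thesis
      proof (cases "h2 a = 0")
        case True
        then show ?thesis using cov3 rt \<open>a \<in> I2\<close> by blast
      next
        case False
        then obtain b where "covers E2 h2 a b" using sh_cov[OF y, of a] \<open>a \<in> I2\<close> by auto
        then show ?thesis using sh_covers_in[OF y] cov by blast
      qed
    next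
      case False
      then have "a \<in> I1" using aI by blast
      then obtain b where "covers E1 h1 a b" using sh_cov[OF x, of a] hp False by auto
      then show ?thesis using sh_covers_in[OF x] cov by blast
    qed
  next
    fix a b c d assume h: "distinct [a, b, c, d]" "covers ?E ?h a b" "covers ?E ?h a c" "covers ?E ?h c d"
    show "{b, d} \<in> ?E"
    proof (cases "a \<in> I1")
      case True
      then have "c \<in> I1" "covers E1 h1 a b" "covers E1 h1 a c" using h cov1 by blast+
      then have "covers E1 h1 c d" using h cov1 by blast
      then show ?thesis using sh_ax3[OF x, of a b c d] h \<open>covers E1 h1 a b\<close> \<open>covers E1 h1 a c\<close> by blast
    next
      case False
      then have a2: "a \<in> I2" using covI h by blast
      show ?thesis
      proof (cases "h2 a = 0")
        case True
        then have "c \<in> I1" "h1 c = 0" using cov3[OF a2] h by blast+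
        then have "covers E1 h1 c d" using cov1 h by blast
        then show ?thesis using c1h \<open>h1 c = 0\<close> by simp
      next
        case False
        then have "b \<in> I2" "c \<in> I2" "covers E2 h2 a b" "covers E2 h2 a c" using h cov2[OF a2] by blast+
        show ?thesis
        proof (cases "h2 c = 0")
          case True
          then have "d \<in> I1" "h1 d = 0" using cov3[OF \<open>c \<in> I2\<close>] h by blast+
          moreover have "h2 b = 0" using c2h[OF \<open>covers E2 h2 a b\<close>] c2h[OF \<open>covers E2 h2 a c\<close>] True by simp
          ultimately show ?thesis using Xin \<open>b \<in> I2\<close> by blast
        next
          case False
          then have "covers E2 h2 c d" using cov2[OF \<open>c \<in> I2\<close>] h by blast
          then show ?thesis using sh_ax3[OF y, of a b c d] h \<open>covers E2 h2 a b\<close> \<open>covers E2 h2 a c\<close> by blast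
        qed
      qed
    qed
  next
    fix a b c d e assume h: "distinct [a, b, c, d, e]" "covers ?E ?h a c" "covers ?E ?h a d"
      "covers ?E ?h b d" "covers ?E ?h b e" "{a, e} \<notin> ?E"
    show "{b, c} \<in> ?E"
    proof (cases "a \<in> I1")
      case True
      then have "c \<in> I1" "d \<in> I1" "covers E1 h1 a c" "covers E1 h1 a d" using h cov1 by blast+
      show ?thesis
      proof (cases "b \<in> I1")
        case True
        then have "covers E1 h1 b d" "covers E1 h1 b e" using h cov1 by blast+
        moreover have "{a,e} \<notin> E1" using h by blast
        ultimately show ?thesis using sh_ax4[OF x, of a b c d e] h \<open>covers E1 h1 a c\<close> \<open>covers E1 h1 a d\<close> by blast
      next
        case False
        then have b2: "b \<in> I2" using covI h by blast
        have "h2 b = 0"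
        proof (rule ccontr)
          assume "h2 b \<noteq> 0" then have "d \<in> I2" using cov2[OF b2] h by blast
          then show False using \<open>d \<in> I1\<close> dj by blast
        qed
        then have "h1 d = 0" using cov3[OF b2] h by blast
        then have "h1 c = 0" using c1h[OF \<open>covers E1 h1 a c\<close>] c1h[OF \<open>covers E1 h1 a d\<close>] by simp
        then show ?thesis using Xin b2 \<open>h2 b = 0\<close> \<open>c \<in> I1\<close> by blast
      qed
    next
      case False
      then have a2: "a \<in> I2" using covI h by blast
      show ?thesis
      proof (cases "h2 a = 0")
        case True
        then have "d \<in> I1" "h1 d = 0" using cov3[OF a2] h by blast+
        have "e \<in> I1 \<and> h1 e = 0"
        proof (cases "b \<in> I1")
          case True
          then have "covers E1 h1 b d" "covers E1 h1 b e" "e \<in> I1" using h cov1 by blast+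
          then show ?thesis using c1h[OF \<open>covers E1 h1 b d\<close>] c1h[OF \<open>covers E1 h1 b e\<close>] \<open>h1 d = 0\<close> by simp
        next
          case False
          then have b2: "b \<in> I2" using covI h by blast
          have "h2 b = 0"
          proof (rule ccontr)
            assume "h2 b \<noteq> 0" then have "d \<in> I2" using cov2[OF b2] h by blast
            then show False using \<open>d \<in> I1\<close> dj by blast
          qed
          then show ?thesis using cov3[OF b2] h by blast
        qed
        then have "{a,e} \<in> ?E" using Xin a2 True by blast
        then show ?thesis using h by blast
      next
        case False
        then have "c \<in> I2" "d \<in> I2" "covers E2 h2 a c" "covers E2 h2 a d" using h cov2[OF a2] by blast+
        have b2: "b \<in> I2" using cov1 h \<open>d \<in> I2\<close> covI dj by blast
        have "h2 b \<noteq> 0" using cov3[OF b2] h \<open>d \<in> I2\<close> dj by blast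
        then have "covers E2 h2 b d" "covers E2 h2 b e" using h cov2[OF b2] by blast+
        moreover have "{a,e} \<notin> E2" using h by blast
        ultimately show ?thesis using sh_ax4[OF y, of a b c d e] h \<open>covers E2 h2 a c\<close> \<open>covers E2 h2 a d\<close> by blast
      qed
    qed
  qed
qed

lemma phi_shrub: "linear t \<Longrightarrow> is_shrub (leaves t) (PE t) (PH t)"
proof (induction t)
  case (Leaf a)
  show ?case by (rule is_shrubI) (auto simp: covers_def)
next
  case (C x y)
  then show ?case using shrub_C[of "leaves x" "PE x" "PH x" "leaves y" "PE y" "PH y"] by simp
next
  case (D x y)
  then show ?case using shrub_D[of "leaves x" "PE x" "PH x" "leaves y" "PE y" "PH y"] root_ex[of x] by simp
qed



definition roots :: "'a tm \<Rightarrow> 'a set" where "roots t = {k \<in> leaves t. PH t k = 0}"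
definition XX :: "'a set \<Rightarrow> 'a set \<Rightarrow> 'a set set" where "XX A B = {{j, k} | j k. j \<in> A \<and> k \<in> B}"

lemma PE_D': "PE (D x y) = PE x \<union> PE y \<union> XX (roots y) (roots x)"
  unfolding XX_def roots_def by simp

lemma XX_Un1: "XX (A \<union> A') B = XX A B \<union> XX A' B" unfolding XX_def by blast

lemma roots_C: "linear (C x y) \<Longrightarrow> roots (C x y) = roots x \<union> roots y"
  unfolding roots_def by (auto simp: PH_out)
lemma roots_D: "linear (D x y) \<Longrightarrow> roots (D x y) = roots x"
  unfolding roots_def by auto

lemma phi_eqI: "PE s = PE t \<Longrightarrow> PH s = PH t \<Longrightarrow> phi s = phi t"
  by (simp add: prod_eq_iff)

lemma rel1_phi:
  assumes "linear (D (D x y) z)"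
  shows "phi (D (D x y) z) = phi (D (D x z) y)"
proof (rule phi_eqI)
  have d: "leaves x \<inter> leaves y = {}" "leaves x \<inter> leaves z = {}" "leaves y \<inter> leaves z = {}"
    using assms by auto
  show "PH (D (D x y) z) = PH (D (D x z) y)" using d by (auto simp: fun_eq_iff PH_out)
  have r: "roots (D x y) = roots x" "roots (D x z) = roots x"
    using assms by (auto intro!: roots_D)
  show "PE (D (D x y) z) = PE (D (D x z) y)" using r
    by (simp add: PE_D' del: PE_D) blast
qed

lemma rel2_phi:
  assumes "linear (D (D x y) z)"
  shows "phi (D (D x y) z) = phi (D x (C z y))"
proof (rule phi_eqI)
  have d: "leaves x \<inter> leaves y = {}" "leaves x \<inter> leaves z = {}" "leaves y \<inter> leaves z = {}"
    using assms by auto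
  show "PH (D (D x y) z) = PH (D x (C z y))" using d by (auto simp: fun_eq_iff PH_out)
  have r: "roots (D x y) = roots x" "roots (C z y) = roots z \<union> roots y"
    using assms by (auto intro!: roots_D roots_C)
  show "PE (D (D x y) z) = PE (D x (C z y))" using r
    by (simp add: PE_D' XX_Un1 del: PE_D) blast
qed

lemma rel3_phi:
  assumes "linear (C (C x y) z)"
  shows "phi (C (C x y) z) = phi (C (C y z) x)"
proof (rule phi_eqI)
  have d: "leaves x \<inter> leaves y = {}" "leaves x \<inter> leaves z = {}" "leaves y \<inter> leaves z = {}"
    using assms by auto
  show "PH (C (C x y) z) = PH (C (C y z) x)" using d by (auto simp: fun_eq_iff PH_out)
  show "PE (C (C x y) z) = PE (C (C y z) x)" using d by auto
qed

lemma Csym_phi: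
  assumes "linear (C x y)"
  shows "phi (C x y) = phi (C y x)"
proof (rule phi_eqI)
  have d: "leaves x \<inter> leaves y = {}" using assms by auto
  show "PH (C x y) = PH (C y x)" using d by (auto simp: fun_eq_iff PH_out)
  show "PE (C x y) = PE (C y x)" using d by auto
qed

lemma eqA_sound: "eqA s t \<Longrightarrow> leaves s = leaves t \<and> (linear s \<longleftrightarrow> linear t) \<and> (linear s \<longrightarrow> phi s = phi t)"
proof (induction rule: eqA.induct)
  case (eq_rel1 x y z) then show ?case using rel1_phi[of x y z] by auto
next
  case (eq_rel2 x y z) then show ?case using rel2_phi[of x y z] by auto
next
  case (eq_rel3 x y z) then show ?case using rel3_phi[of x y z] by auto
next
  case (eq_Csym x y) then show ?case using Csym_phi[of x y] by auto
next
  case (eq_C1 x x' y)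
  then have "linear (C x y) \<Longrightarrow> PE x = PE x' \<and> PH x = PH x'" by simp
  with eq_C1 show ?case by (auto intro!: phi_eqI)
next
  case (eq_C2 y y' x)
  then have "linear (C x y) \<Longrightarrow> PE y = PE y' \<and> PH y = PH y'" by simp
  with eq_C2 show ?case by (auto intro!: phi_eqI)
next
  case (eq_D1 x x' y)
  then have "linear (D x y) \<Longrightarrow> PE x = PE x' \<and> PH x = PH x'" by simp
  with eq_D1 show ?case by (auto intro!: phi_eqI)
next
  case (eq_D2 y y' x)
  then have "linear (D x y) \<Longrightarrow> PE y = PE y' \<and> PH y = PH y'" by simp
  with eq_D2 show ?case by (auto intro!: phi_eqI)
qed auto



definition ch :: "'a set set \<Rightarrow> ('a \<Rightarrow> nat) \<Rightarrow> 'a \<Rightarrow> 'a set" where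
  "ch E h v = {c. covers E h v c}"

definition closed :: "'a set set \<Rightarrow> 'a set \<Rightarrow> bool" where
  "closed E J \<longleftrightarrow> (\<forall>i j. {i,j} \<in> E \<longrightarrow> i \<in> J \<longrightarrow> j \<in> J)"

lemma sh_edgeE:
  assumes "is_shrub I E h" "e \<in> E"
  obtains i j where "e = {i,j}" "i \<noteq> j" "i \<in> I" "j \<in> I"
proof -
  from sh_edge[OF assms] obtain i j where "e = {i,j} \<and> i \<noteq> j \<and> i \<in> I \<and> j \<in> I" by (elim exE)
  then show ?thesis using that by blast
qed

lemma covers_h: "covers E h a b \<Longrightarrow> h a = h b + 1" unfolding covers_def by simp

lemma shrub_restrict:
  assumes S: "is_shrub I E h" and JI: "J \<subseteq> I" and hc: "\<And>v. v \<in> J \<Longrightarrow> s \<le> h v"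
    and cl: "\<And>a b. a \<in> J \<Longrightarrow> s < h a \<Longrightarrow> covers E h a b \<Longrightarrow> b \<in> J"
  shows "is_shrub J {e \<in> E. e \<subseteq> J} (\<lambda>i. if i \<in> J then h i - s else 0)"
    (is "is_shrub J ?E ?h")
proof -
  have cov: "covers ?E ?h a b \<longleftrightarrow> a \<in> J \<and> b \<in> J \<and> covers E h a b" for a b
  proof
    assume H: "covers ?E ?h a b"
    then have e: "{b,a} \<in> ?E" and hh: "?h a = ?h b + 1" unfolding covers_def by blast+
    then have "a \<in> J" "b \<in> J" "{b,a} \<in> E" by blast+
    moreover have "s \<le> h a" "s \<le> h b" using hc \<open>a \<in> J\<close> \<open>b \<in> J\<close> by blast+
    ultimately show "a \<in> J \<and> b \<in> J \<and> covers E h a b" using hh unfolding covers_def by simp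
  next
    assume H: "a \<in> J \<and> b \<in> J \<and> covers E h a b"
    then have "s \<le> h a" "s \<le> h b" using hc by blast+
    moreover have "{b,a} \<in> E" "h a = h b + 1" using H unfolding covers_def by blast+
    ultimately show "covers ?E ?h a b" using H unfolding covers_def by simp
  qed
  show ?thesis
  proof (rule is_shrubI)
    fix e assume e: "e \<in> ?E"
    then obtain i j where "e = {i,j}" "i \<noteq> j" using sh_edge[OF S, of e] by blast
    moreover have "e \<subseteq> J" using e by blast
    ultimately show "\<exists>i j. e = {i, j} \<and> i \<noteq> j \<and> i \<in> J \<and> j \<in> J" by blast
  next
    fix z assume "z \<notin> J" then show "?h z = 0" by simp
  next
    fix i j assume H: "{i,j} \<in> ?E"
    then have "i \<in> J" "j \<in> J" "{i,j} \<in> E" by auto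
    moreover have "s \<le> h i" "s \<le> h j" using hc \<open>i \<in> J\<close> \<open>j \<in> J\<close> by blast+
    ultimately show "?h i = ?h j + 1 \<or> ?h j = ?h i + 1" using sh_ht[OF S, of i j] by auto
  next
    fix a assume aJ: "a \<in> J" and hp: "0 < ?h a"
    then have "s < h a" by simp
    have "a \<in> I" using JI aJ by blast
    then obtain b where b: "covers E h a b" using sh_cov[OF S, of a] \<open>s < h a\<close> by auto
    have "b \<in> J" using cl[OF aJ \<open>s < h a\<close> b] .
    then have "covers ?E ?h a b" using cov aJ b by blast
    then show "\<exists>b. covers ?E ?h a b" ..
  next
    fix a b c d assume H: "distinct [a, b, c, d]" "covers ?E ?h a b" "covers ?E ?h a c" "covers ?E ?h c d"
    then have "covers E h a b" "covers E h a c" "covers E h c d" "b \<in> J" "d \<in> J" using cov by blast+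
    then have "{b,d} \<in> E" using sh_ax3[OF S, of a b c d] H(1) by blast
    then show "{b, d} \<in> ?E" using \<open>b \<in> J\<close> \<open>d \<in> J\<close> by blast
  next
    fix a b c d e assume "distinct [a, b, c, d, e]" "covers ?E ?h a c" "covers ?E ?h a d"
      "covers ?E ?h b d" "covers ?E ?h b e" "{a, e} \<notin> ?E"
    note H = this
    then have "covers E h a c" "covers E h a d" "covers E h b d" "covers E h b e" "b \<in> J" "c \<in> J" "a \<in> J" "e \<in> J"
      using cov by blast+
    moreover have "{a,e} \<notin> E" using H \<open>a \<in> J\<close> \<open>e \<in> J\<close> by blast
    ultimately have "{b,c} \<in> E" using sh_ax4[OF S, of a b c d e] H(1) by blast
    then show "{b, c} \<in> ?E" using \<open>b \<in> J\<close> \<open>c \<in> J\<close> by blast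
  qed
qed

lemma exists_root:
  assumes S: "is_shrub I E h" and "v \<in> I"
  shows "\<exists>k\<in>I. h k = 0"
proof -
  obtain k where k: "k \<in> I" "\<forall>y. y \<in> I \<longrightarrow> h k \<le> h y"
    using ex_has_least_nat[of "\<lambda>x. x \<in> I" v h] assms by blast
  show ?thesis
  proof (cases "h k = 0")
    case False
    then obtain b where b: "covers E h k b" using sh_cov[OF S] k by auto
    then have "b \<in> I" using sh_covers_in[OF S] by blast
    then have "h k \<le> h b" using k by blast
    then show ?thesis using covers_h[OF b] by simp
  qed (use k in blast)
qed

lemma exists_h1:
  assumes S: "is_shrub I E h" and "v \<in> I" "0 < h v"
  shows "\<exists>u\<in>I. h u = 1"
proof -
  obtain k where k: "k \<in> I" "0 < h k" "\<forall>y. y \<in> I \<and> 0 < h y \<longrightarrow> h k \<le> h y"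
    using ex_has_least_nat[of "\<lambda>x. x \<in> I \<and> 0 < h x" v h] assms by blast
  then obtain b where b: "covers E h k b" using sh_cov[OF S] by auto
  then have "b \<in> I" using sh_covers_in[OF S] by blast
  have "h b = 0"
  proof (rule ccontr)
    assume "h b \<noteq> 0" then show False using k(3)[rule_format, of b] \<open>b \<in> I\<close> covers_h[OF b] by simp
  qed
  then show ?thesis using covers_h[OF b] k by auto
qed

lemma sibling:
  assumes S: "is_shrub I E h" and "covers E h j a" "covers E h j c" "covers E h a d"
  shows "covers E h c d"
proof (cases "a = c")
  case False
  have ha: "h j = h a + 1" "h j = h c + 1" "h a = h d + 1" using assms covers_h by metis+
  then have "distinct [j, c, a, d]" using False by auto
  then have "{c,d} \<in> E" using sh_ax3[OF S, of j c a d] assms by blast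
  then show ?thesis using ha unfolding covers_def by (simp add: insert_commute)
qed (use assms in simp)

lemma sibling_ch:
  assumes S: "is_shrub I E h" and "covers E h j a" "covers E h j c"
  shows "ch E h a = ch E h c"
  using sibling[OF S assms(2,3)] sibling[OF S assms(3,2)] unfolding ch_def by blast

lemma laminar:
  assumes S: "is_shrub I E h" and hu: "h u = 1" and hw: "h w = 1"
    and d: "d \<in> ch E h u" "d \<in> ch E h w"
  shows "ch E h u \<subseteq> ch E h w \<or> ch E h w \<subseteq> ch E h u"
proof (rule ccontr)
  assume "\<not> ?thesis"
  then obtain c e where c: "c \<in> ch E h u" "c \<notin> ch E h w" and e: "e \<in> ch E h w" "e \<notin> ch E h u" by blast
  have cv: "covers E h u c" "covers E h u d" "covers E h w d" "covers E h w e"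
    using c d e unfolding ch_def by auto
  have hh: "h c = 0" "h d = 0" "h e = 0" using covers_h[OF cv(1)] covers_h[OF cv(2)] covers_h[OF cv(4)] hu hw by simp_all
  have "u \<noteq> w" using c by blast
  moreover have "c \<noteq> d" "d \<noteq> e" "c \<noteq> e" using c d e by blast+
  ultimately have dist: "distinct [u, w, c, d, e]" using hh hu hw by auto
  have "{u,e} \<notin> E" using e hu hh unfolding ch_def covers_def by (auto simp: insert_commute)
  then have "{w,c} \<in> E" using sh_ax4[OF S dist cv] by blast
  then have "c \<in> ch E h w" using hw hh unfolding ch_def covers_def by (simp add: insert_commute)
  then show False using c by blast
qed

fun Lv :: "'a set set \<Rightarrow> ('a \<Rightarrow> nat) \<Rightarrow> ('a \<Rightarrow> bool) \<Rightarrow> ('a set \<Rightarrow> bool) \<Rightarrow> nat \<Rightarrow> 'a \<Rightarrow> bool" where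
  "Lv E h P0 P1 0 v = P0 v"
| "Lv E h P0 P1 (Suc 0) v = P1 (ch E h v)"
| "Lv E h P0 P1 (Suc (Suc n)) v = (\<forall>c. covers E h v c \<longrightarrow> Lv E h P0 P1 (Suc n) c)"

lemma Lv_sib:
  assumes S: "is_shrub I E h" and "covers E h j a" "covers E h j c" "Lv E h P0 P1 (Suc n) a"
  shows "Lv E h P0 P1 (Suc n) c"
proof (cases n)
  case 0 then show ?thesis using assms sibling_ch[OF S assms(2,3)] by simp
next
  case (Suc m) then show ?thesis using assms sibling[OF S assms(3,2)] by simp
qed

lemma Lv_up:
  assumes S: "is_shrub I E h" and cj: "covers E h j i" and L: "Lv E h P0 P1 (Suc n) i" and hi: "h i = Suc n"
  shows "Lv E h P0 P1 (Suc (Suc n)) j"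
  using Lv_sib[OF S cj _ L] by simp



lemma ch_sub: "is_shrub I E h \<Longrightarrow> ch E h w \<subseteq> I"
  unfolding ch_def using sh_covers_in by fastforce

lemma connected_top:
  assumes S: "is_shrub I E h" and fin: "finite I"
    and nocl: "\<And>J. closed E J \<Longrightarrow> J \<subseteq> I \<Longrightarrow> J \<noteq> {} \<Longrightarrow> J = I"
    and v: "v \<in> I" "0 < h v"
  shows "\<exists>u\<in>I. h u = 1 \<and> ch E h u = {k \<in> I. h k = 0}"
proof -
  obtain w where w: "w \<in> I" "h w = 1" using exists_h1[OF S v] by blast
  obtain u0 where u0: "u0 \<in> I" "h u0 = 1"
    and mx: "\<forall>y. y \<in> I \<and> h y = 1 \<longrightarrow> card I - card (ch E h u0) \<le> card I - card (ch E h y)"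
    using ex_has_least_nat[of "\<lambda>x. x \<in> I \<and> h x = 1" w "\<lambda>x. card I - card (ch E h x)"] w by blast
  define M where "M = ch E h u0"
  have cardle: "card (ch E h y) \<le> card I" for y using card_mono[OF fin ch_sub[OF S]] .
  have maxc: "y \<in> I \<Longrightarrow> h y = 1 \<Longrightarrow> card (ch E h y) \<le> card M" for y
    using mx cardle[of y] cardle[of u0] unfolding M_def by force
  have maxM: "ch E h y \<subseteq> M" if "y \<in> I" "h y = 1" "d \<in> ch E h y" "d \<in> M" for y d
  proof -
    have "ch E h y \<subseteq> M \<or> M \<subseteq> ch E h y" using laminar[OF S that(2) u0(2) that(3)] that(4) unfolding M_def by blast
    moreover have "M \<subseteq> ch E h y \<Longrightarrow> ch E h y \<subseteq> M"
    proof -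
      assume sub: "M \<subseteq> ch E h y"
      have "finite (ch E h y)" using ch_sub[OF S] fin finite_subset by blast
      then have "M = ch E h y" using card_subset_eq[OF _ sub] maxc[OF that(1,2)] card_mono[OF _ sub] by linarith
      then show ?thesis by simp
    qed
    ultimately show ?thesis by blast
  qed
  define J where "J = {v \<in> I. Lv E h (\<lambda>v. v \<in> M) (\<lambda>A. A \<subseteq> M) (h v) v}"
  have "closed E J"
    unfolding closed_def
  proof (intro allI impI)
    fix i j assume ij: "{i,j} \<in> E" and iJ: "i \<in> J"
    have jI: "j \<in> I" using sh_edge2[OF S ij] by blast
    have Li: "Lv E h (\<lambda>v. v \<in> M) (\<lambda>A. A \<subseteq> M) (h i) i" using iJ unfolding J_def by blast
    have "h i = h j + 1 \<or> h j = h i + 1" using sh_ht[OF S ij] .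
    then show "j \<in> J"
    proof
      assume hh: "h i = h j + 1"
      then have cv: "covers E h i j" using ij unfolding covers_def by (simp add: insert_commute)
      show ?thesis
      proof (cases "h j")
        case 0
        then have "h i = Suc 0" using hh by simp
        then have "ch E h i \<subseteq> M" using Li by simp
        then have "j \<in> M" using cv unfolding ch_def by blast
        then show ?thesis using jI 0 unfolding J_def by simp
      next
        case (Suc n)
        then have "h i = Suc (Suc n)" using hh by simp
        then have "Lv E h (\<lambda>v. v \<in> M) (\<lambda>A. A \<subseteq> M) (Suc n) j" using Li cv by simp
        then show ?thesis using jI Suc unfolding J_def by simp
      qed
    next
      assume hh: "h j = h i + 1"
      then have cv: "covers E h j i" using ij unfolding covers_def by simp
      show ?thesis
      proof (cases "h i")
        case 0
        then have "i \<in> M" using Li by simp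
        moreover have "i \<in> ch E h j" using cv unfolding ch_def by simp
        ultimately have "ch E h j \<subseteq> M" using maxM[OF jI] hh 0 by simp
        then show ?thesis using jI hh 0 unfolding J_def by simp
      next
        case (Suc n)
        then have "Lv E h (\<lambda>v. v \<in> M) (\<lambda>A. A \<subseteq> M) (Suc (Suc n)) j" using Lv_up[OF S cv] Li by simp
        then show ?thesis using jI hh Suc unfolding J_def by simp
      qed
    qed
  qed
  moreover have "u0 \<in> J" using u0 unfolding J_def M_def by simp
  ultimately have JI: "J = I" using nocl[of J] unfolding J_def by blast
  have "ch E h u0 = {k \<in> I. h k = 0}"
  proof
    show "ch E h u0 \<subseteq> {k \<in> I. h k = 0}" using ch_sub[OF S, of u0] u0 covers_h unfolding ch_def by fastforce
    show "{k \<in> I. h k = 0} \<subseteq> ch E h u0"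
    proof
      fix k assume "k \<in> {k \<in> I. h k = 0}"
      then have "k \<in> J" "h k = 0" using JI by auto
      then show "k \<in> ch E h u0" unfolding J_def M_def by simp
    qed
  qed
  then show ?thesis using u0 by blast
qed



lemma closed_covers: "closed E J \<Longrightarrow> covers E h a b \<Longrightarrow> a \<in> J \<Longrightarrow> b \<in> J"
  unfolding closed_def covers_def by (metis insert_commute)

lemma surj_shrub:
  "finite I \<Longrightarrow> I \<noteq> {} \<Longrightarrow> is_shrub I E h \<Longrightarrow> \<exists>t. linear t \<and> leaves t = I \<and> phi t = (E, h)"
proof (induction "card I" arbitrary: I E h rule: less_induct)
  case less
  note S = less.prems(3) and fin = less.prems(1)
  have IH: "\<exists>t. linear t \<and> leaves t = J \<and> phi t = ({e \<in> E. e \<subseteq> J}, (\<lambda>i. if i \<in> J then h i - s else 0))"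
    if "J \<subseteq> I" "J \<noteq> {}" "J \<noteq> I" "\<And>v. v \<in> J \<Longrightarrow> s \<le> h v"
       "\<And>a b. a \<in> J \<Longrightarrow> s < h a \<Longrightarrow> covers E h a b \<Longrightarrow> b \<in> J" for J s
  proof -
    have "card J < card I" using that(1,3) fin by (simp add: psubset_card_mono)
    moreover have "finite J" using that(1) fin finite_subset by blast
    moreover have "is_shrub J {e \<in> E. e \<subseteq> J} (\<lambda>i. if i \<in> J then h i - s else 0)"
      by (rule shrub_restrict[OF S that(1)]) (use that(4,5) in blast)+
    ultimately show ?thesis using less.hyps that(2) by blast
  qed
  show ?case
  proof (cases "card I = 1")
    case True
    then obtain a where Ia: "I = {a}" using card_1_singletonE by blast
    have E0: "E = {}"
    proof (rule ccontr)
      assume "E \<noteq> {}"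
      then obtain e where "e \<in> E" by blast
      then obtain i j where "e = {i,j}" "i \<noteq> j" "i \<in> I" "j \<in> I" by (rule sh_edgeE[OF S])
      then show False using Ia by blast
    qed
    have "h a = 0" using exists_root[OF S, of a] Ia by blast
    then have "h = (\<lambda>_. 0)" using sh_out[OF S] Ia by (metis singletonD)
    then show ?thesis using Ia E0 by (intro exI[of _ "Leaf a"]) simp
  next
    case c1: False
    show ?thesis
    proof (cases "\<exists>J. closed E J \<and> J \<subseteq> I \<and> J \<noteq> {} \<and> J \<noteq> I")
      case True
      then obtain J where J: "closed E J" "J \<subseteq> I" "J \<noteq> {}" "J \<noteq> I" by blast
      define K where "K = I - J"
      have K: "K \<subseteq> I" "K \<noteq> {}" "K \<noteq> I" using J unfolding K_def by blast+
      have clK: "b \<in> K" if "a \<in> K" "covers E h a b" for a b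
      proof -
        have "b \<in> I" using sh_covers_in[OF S that(2)] by blast
        moreover have "b \<notin> J"
        proof
          assume "b \<in> J"
          moreover have "{b,a} \<in> E" using that(2) unfolding covers_def by blast
          ultimately have "a \<in> J" using J(1) unfolding closed_def by blast
          then show False using that(1) unfolding K_def by blast
        qed
        ultimately show ?thesis unfolding K_def by blast
      qed
      obtain tJ where tJ: "linear tJ" "leaves tJ = J" "phi tJ = ({e \<in> E. e \<subseteq> J}, (\<lambda>i. if i \<in> J then h i - 0 else 0))"
        using IH[OF J(2-4), of 0] closed_covers[OF J(1)] by blast
      obtain tK where tK: "linear tK" "leaves tK = K" "phi tK = ({e \<in> E. e \<subseteq> K}, (\<lambda>i. if i \<in> K then h i - 0 else 0))"
        using IH[OF K, of 0] clK by blast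
      have JK: "J \<inter> K = {}" "J \<union> K = I" using J(2) unfolding K_def by blast+
      have PEeq: "{e \<in> E. e \<subseteq> J} \<union> {e \<in> E. e \<subseteq> K} = E"
      proof
        show "E \<subseteq> {e \<in> E. e \<subseteq> J} \<union> {e \<in> E. e \<subseteq> K}"
        proof
          fix e assume e: "e \<in> E"
          then obtain i j where ij: "e = {i,j}" "i \<noteq> j" "i \<in> I" "j \<in> I" by (rule sh_edgeE[OF S])
          have eij: "{i,j} \<in> E" "{j,i} \<in> E" using e ij by (auto simp: insert_commute)
          show "e \<in> {e \<in> E. e \<subseteq> J} \<union> {e \<in> E. e \<subseteq> K}"
          proof (cases "i \<in> J")
            case True
            then have "j \<in> J" using J(1) eij unfolding closed_def by blast
            then show ?thesis using True e ij by blast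
          next
            case False
            then have "j \<notin> J" using J(1) eij unfolding closed_def by blast
            then show ?thesis using False e ij unfolding K_def by blast
          qed
        qed
      qed blast
      have PHeq: "(\<lambda>i. if i \<in> K then (if i \<in> K then h i - 0 else 0) else (if i \<in> J then h i - 0 else 0)) = h"
        using sh_out[OF S] JK by (auto simp: fun_eq_iff)
      have pJ: "PE tJ = {e \<in> E. e \<subseteq> J}" "PH tJ = (\<lambda>i. if i \<in> J then h i - 0 else 0)" using tJ(3) by simp_all
      have pK: "PE tK = {e \<in> E. e \<subseteq> K}" "PH tK = (\<lambda>i. if i \<in> K then h i - 0 else 0)" using tK(3) by simp_all
      have "PE (C tJ tK) = E" unfolding PE_C pJ pK by (fact PEeq)
      moreover have "PH (C tJ tK) = h" unfolding PH_C pJ pK tK(2) by (fact PHeq)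
      moreover have "linear (C tJ tK)" "leaves (C tJ tK) = I" using tJ tK JK by simp_all
      ultimately show ?thesis by (intro exI[of _ "C tJ tK"]) (simp add: prod_eq_iff)
    next
      case False
      then have nocl: "\<And>J. closed E J \<Longrightarrow> J \<subseteq> I \<Longrightarrow> J \<noteq> {} \<Longrightarrow> J = I" by blast
      obtain a where aI: "a \<in> I" using less.prems(2) by blast
      obtain v where v: "v \<in> I" "0 < h v"
      proof (rule ccontr)
        note v_ex = that
        assume "\<not> thesis"
        have h0: "h v = 0" if "v \<in> I" for v
        proof (rule ccontr)
          assume "h v \<noteq> 0"
          then have "0 < h v" by simp
          then show False using \<open>\<not> thesis\<close> \<open>v \<in> I\<close> v_ex by blast
        qed
        have "closed E {a}" unfolding closed_def
        proof (intro allI impI)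
          fix i j assume "{i,j} \<in> E" "i \<in> {a}"
          then show "j \<in> {a}" using sh_ht[OF S, of i j] sh_edge2[OF S, of i j] h0 by auto
        qed
        then have "{a} = I" using nocl aI by blast
        then show False using c1 by auto
      qed
      obtain u0 where u0: "u0 \<in> I" "h u0 = 1" "ch E h u0 = {k \<in> I. h k = 0}"
        using connected_top[OF S fin nocl v] by blast
      define R where "R = {k \<in> I. h k = 0}"
      define P where "P = Lv E h (\<lambda>_. False) (\<lambda>A. A = R)"
      define Y where "Y = {v \<in> I. 0 < h v \<and> P (h v) v}"
      define B where "B = I - Y"
      have Ymem: "v \<in> Y \<longleftrightarrow> v \<in> I \<and> 0 < h v \<and> P (h v) v" for v unfolding Y_def by simp
      have Bmem: "v \<in> B \<longleftrightarrow> v \<in> I \<and> v \<notin> Y" for v unfolding B_def by simp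
      have Y4: "b \<in> Y" if H: "a \<in> Y" "1 < h a" "covers E h a b" for a b
      proof -
        obtain n where n: "h a = Suc (Suc n)" using H(2) by (cases "h a"; cases "h a - 1") auto
        have "P (Suc (Suc n)) a" using H(1) n using Ymem by simp
        then have "P (Suc n) b" using H(3) unfolding P_def by simp
        moreover have "h b = Suc n" using covers_h[OF H(3)] n by simp
        moreover have "b \<in> I" using sh_covers_in[OF S H(3)] by blast
        ultimately show ?thesis using Ymem by simp
      qed
      have B4: "b \<in> B" if H: "a \<in> B" "0 < h a" "covers E h a b" for a b
      proof (rule ccontr)
        assume "b \<notin> B"
        moreover have "b \<in> I" using sh_covers_in[OF S H(3)] by blast
        ultimately have bY: "b \<in> Y" using Bmem by blast
        then obtain n where n: "h b = Suc n" "P (Suc n) b" using Ymem by (auto dest: gr0_implies_Suc)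
        have "P (Suc (Suc n)) a" using Lv_up[OF S H(3)] n unfolding P_def by blast
        moreover have "h a = Suc (Suc n)" using covers_h[OF H(3)] n by simp
        ultimately have "a \<in> Y" using H(1) using Ymem Bmem by simp
        then show False using H(1) using Bmem by blast
      qed
      have Y2: "h y = 1 \<and> h b = 0" if H: "y \<in> Y" "b \<in> B" "{y,b} \<in> E" for y b
      proof -
        have "h y = h b + 1 \<or> h b = h y + 1" using sh_ht[OF S H(3)] .
        then show ?thesis
        proof
          assume hh: "h y = h b + 1"
          then have cv: "covers E h y b" using H(3) unfolding covers_def by (simp add: insert_commute)
          have "\<not> 1 < h y"
          proof
            assume "1 < h y" then have "b \<in> Y" using Y4[OF H(1) _ cv] by blast
            then show False using H(2) using Bmem by blast
          qed
          moreover have "0 < h y" using H(1) using Ymem by blast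
          ultimately show ?thesis using hh by simp
        next
          assume hh: "h b = h y + 1"
          then have cv: "covers E h b y" using H(3) unfolding covers_def by simp
          have "y \<in> B" using B4[OF H(2) _ cv] hh by simp
          then show ?thesis using H(1) using Bmem by blast
        qed
      qed
      have Y3: "{y,k} \<in> E" if H: "y \<in> Y" "h y = 1" "k \<in> R" for y k
      proof -
        have "P (Suc 0) y" using H(1,2) using Ymem by simp
        then have "ch E h y = R" unfolding P_def by simp
        then have "covers E h y k" using H(3) unfolding ch_def by blast
        then show ?thesis unfolding covers_def by (simp add: insert_commute)
      qed
      have "P (Suc 0) u0" using u0(3) unfolding P_def R_def by simp
      then have "P (h u0) u0" using u0(2) by simp
      then have u0Y: "u0 \<in> Y" using u0(1,2) Ymem[of u0] by simp
      obtain r where r: "r \<in> I" "h r = 0" using exists_root[OF S aI] by blast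
      have "r \<notin> Y" using r Ymem[of r] by simp
      then have rB: "r \<in> B" using r Bmem[of r] by simp
      have YI: "Y \<subseteq> I" using Ymem by blast
      have BI: "B \<subseteq> I" using Bmem by blast
      have Ysub: "Y \<subseteq> I" "Y \<noteq> {}" "Y \<noteq> I" using YI u0Y \<open>r \<notin> Y\<close> r(1) by blast+
      have Bsub: "B \<subseteq> I" "B \<noteq> {}" "B \<noteq> I" using BI rB u0Y u0(1) Bmem[of u0] by blast+
      have Ypos: "\<And>v. v \<in> Y \<Longrightarrow> 1 \<le> h v" using Ymem by (simp add: Suc_le_eq)
      obtain tY where tY: "linear tY" "leaves tY = Y" "phi tY = ({e \<in> E. e \<subseteq> Y}, (\<lambda>i. if i \<in> Y then h i - 1 else 0))"
      proof -
        have "\<exists>t. linear t \<and> leaves t = Y \<and> phi t = ({e \<in> E. e \<subseteq> Y}, (\<lambda>i. if i \<in> Y then h i - 1 else 0))"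
          apply (rule IH[of Y 1])
          using Ysub apply blast
          using Ysub apply blast
          using Ysub apply blast
          using Ypos apply blast
          using Y4 apply blast
          done
        then show ?thesis using that by blast
      qed
      obtain tB where tB: "linear tB" "leaves tB = B" "phi tB = ({e \<in> E. e \<subseteq> B}, (\<lambda>i. if i \<in> B then h i - 0 else 0))"
      proof -
        have "\<exists>t. linear t \<and> leaves t = B \<and> phi t = ({e \<in> E. e \<subseteq> B}, (\<lambda>i. if i \<in> B then h i - 0 else 0))"
          apply (rule IH[of B 0])
          using Bsub apply blast
          using Bsub apply blast
          using Bsub apply blast
          apply simp
          using B4 apply blast
          done
        then show ?thesis using that by blast
      qed
      have BY: "B \<inter> Y = {}" "B \<union> Y = I" using YI unfolding B_def by blast+
      let ?X = "{{j, k} |j k. j \<in> Y \<and> (if j \<in> Y then h j - 1 else 0) = 0 \<and> k \<in> B \<and> (if k \<in> B then h k - 0 else 0) = 0}"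
      have PEeq: "{e \<in> E. e \<subseteq> B} \<union> {e \<in> E. e \<subseteq> Y} \<union> ?X = E"
      proof
        show "{e \<in> E. e \<subseteq> B} \<union> {e \<in> E. e \<subseteq> Y} \<union> ?X \<subseteq> E"
        proof
          fix e assume "e \<in> {e \<in> E. e \<subseteq> B} \<union> {e \<in> E. e \<subseteq> Y} \<union> ?X"
          then show "e \<in> E"
          proof (elim UnE)
            assume "e \<in> ?X"
            then obtain j k where jk: "e = {j,k}" "j \<in> Y" "h j - 1 = 0" "k \<in> B" "h k = 0" by auto
            have "h j = 1" using jk(2,3) Ypos[of j] by simp
            moreover have "k \<in> R" using jk Bsub unfolding R_def by blast
            ultimately show ?thesis using Y3[OF jk(2)] jk(1) by blast
          qed blast+
        qed
        show "E \<subseteq> {e \<in> E. e \<subseteq> B} \<union> {e \<in> E. e \<subseteq> Y} \<union> ?X"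
        proof
          fix e assume e: "e \<in> E"
          then obtain i j where ij: "e = {i,j}" "i \<noteq> j" "i \<in> I" "j \<in> I" by (rule sh_edgeE[OF S])
          have eij: "{i,j} \<in> E" "{j,i} \<in> E" using e ij by (auto simp: insert_commute)
          consider "i \<in> Y" "j \<in> Y" | "i \<in> B" "j \<in> B" | "i \<in> Y" "j \<in> B" | "i \<in> B" "j \<in> Y"
            using ij BY by blast
          then show "e \<in> {e \<in> E. e \<subseteq> B} \<union> {e \<in> E. e \<subseteq> Y} \<union> ?X"
          proof cases
            case 1 then show ?thesis using e ij by blast
          next
            case 2 then show ?thesis using e ij by blast
          next
            case 3
            then have "h i = 1" "h j = 0" using Y2[OF _ _ eij(1)] by blast+
            then have "i \<in> Y \<and> (if i \<in> Y then h i - 1 else 0) = 0 \<and> j \<in> B \<and> (if j \<in> B then h j - 0 else 0) = 0"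
              using 3 by simp
            then have "{i,j} \<in> ?X" by blast
            then show ?thesis using ij by blast
          next
            case 4
            then have "h j = 1" "h i = 0" using Y2[OF _ _ eij(2)] by blast+
            then have "j \<in> Y \<and> (if j \<in> Y then h j - 1 else 0) = 0 \<and> i \<in> B \<and> (if i \<in> B then h i - 0 else 0) = 0"
              using 4 by simp
            then have "{j,i} \<in> ?X" by blast
            then show ?thesis using ij eij by (simp add: insert_commute)
          qed
        qed
      qed
      have PHeq: "(\<lambda>i. if i \<in> Y then (if i \<in> Y then h i - 1 else 0) + 1 else (if i \<in> B then h i - 0 else 0)) = h"
      proof (rule ext)
        fix i
        show "(if i \<in> Y then (if i \<in> Y then h i - 1 else 0) + 1 else (if i \<in> B then h i - 0 else 0)) = h i"
        proof (cases "i \<in> Y")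
          case True then show ?thesis using Ypos[OF True] by simp
        next
          case False
          show ?thesis
          proof (cases "i \<in> B")
            case F2: False
            then have "i \<notin> I" using False BY by blast
            then show ?thesis using False F2 sh_out[OF S] by simp
          qed (use False in simp)
        qed
      qed
      have pB: "PE tB = {e \<in> E. e \<subseteq> B}" "PH tB = (\<lambda>i. if i \<in> B then h i - 0 else 0)" using tB(3) by simp_all
      have pY: "PE tY = {e \<in> E. e \<subseteq> Y}" "PH tY = (\<lambda>i. if i \<in> Y then h i - 1 else 0)" using tY(3) by simp_all
      have "PE (D tB tY) = E" unfolding PE_D pB pY tB(2) tY(2) by (fact PEeq)
      moreover have "PH (D tB tY) = h" unfolding PH_D pB pY tY(2) by (fact PHeq)
      moreover have "linear (D tB tY)" "leaves (D tB tY) = I" using tB tY BY by simp_all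
      ultimately show ?thesis by (intro exI[of _ "D tB tY"]) (simp add: prod_eq_iff)
    qed
  qed
qed



lemma edge_in: "linear t \<Longrightarrow> {i,j} \<in> PE t \<Longrightarrow> i \<in> leaves t \<and> j \<in> leaves t"
proof -
  assume "linear t" "{i,j} \<in> PE t"
  then obtain a b where "{i,j} = {a,b}" "a \<in> leaves t" "b \<in> leaves t" using PE_sub by meson
  then show ?thesis by (auto simp: doubleton_eq)
qed

lemma edge_sub: "linear t \<Longrightarrow> e \<in> PE t \<Longrightarrow> e \<subseteq> leaves t \<and> e \<noteq> {}"
proof -
  assume "linear t" "e \<in> PE t"
  then obtain a b where "e = {a,b}" "a \<in> leaves t" "b \<in> leaves t" using PE_sub by meson
  then show ?thesis by auto
qed

lemma covers_C_iff:
  assumes "linear (C x y)"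
  shows "covers (PE (C x y)) (PH (C x y)) a b \<longleftrightarrow>
     (a \<in> leaves x \<and> b \<in> leaves x \<and> covers (PE x) (PH x) a b) \<or> (a \<in> leaves y \<and> b \<in> leaves y \<and> covers (PE y) (PH y) a b)"
proof -
  have lx: "linear x" "linear y" and dj: "leaves x \<inter> leaves y = {}" using assms by auto
  show ?thesis
  proof
    assume H: "covers (PE (C x y)) (PH (C x y)) a b"
    then have e: "{b,a} \<in> PE x \<or> {b,a} \<in> PE y" and hh: "PH (C x y) a = PH (C x y) b + 1"
      unfolding covers_def by auto
    show "(a \<in> leaves x \<and> b \<in> leaves x \<and> covers (PE x) (PH x) a b) \<or> (a \<in> leaves y \<and> b \<in> leaves y \<and> covers (PE y) (PH y) a b)"
    proof (cases "{b,a} \<in> PE x")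
      case True
      then have "a \<in> leaves x" "b \<in> leaves x" using edge_in[OF lx(1)] by blast+
      then have "a \<notin> leaves y" "b \<notin> leaves y" using dj by blast+
      then show ?thesis using True hh \<open>a \<in> leaves x\<close> \<open>b \<in> leaves x\<close> unfolding covers_def by simp
    next
      case False
      then have "{b,a} \<in> PE y" using e by blast
      then have "a \<in> leaves y" "b \<in> leaves y" using edge_in[OF lx(2)] by blast+
      then show ?thesis using \<open>{b,a} \<in> PE y\<close> hh unfolding covers_def by simp
    qed
  next
    assume "(a \<in> leaves x \<and> b \<in> leaves x \<and> covers (PE x) (PH x) a b) \<or> (a \<in> leaves y \<and> b \<in> leaves y \<and> covers (PE y) (PH y) a b)"
    then show "covers (PE (C x y)) (PH (C x y)) a b"
    proof
      assume H: "a \<in> leaves x \<and> b \<in> leaves x \<and> covers (PE x) (PH x) a b"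
      then have "a \<notin> leaves y" "b \<notin> leaves y" using dj by blast+
      then show ?thesis using H unfolding covers_def by simp
    next
      assume "a \<in> leaves y \<and> b \<in> leaves y \<and> covers (PE y) (PH y) a b"
      then show ?thesis unfolding covers_def by simp
    qed
  qed
qed

lemma covers_D_iff:
  assumes "linear (D x y)"
  shows "covers (PE (D x y)) (PH (D x y)) a b \<longleftrightarrow>
     (a \<in> leaves x \<and> b \<in> leaves x \<and> covers (PE x) (PH x) a b) \<or> (a \<in> leaves y \<and> b \<in> leaves y \<and> covers (PE y) (PH y) a b)
     \<or> (a \<in> leaves y \<and> PH y a = 0 \<and> b \<in> leaves x \<and> PH x b = 0)"
proof -
  have lx: "linear x" "linear y" and dj: "leaves x \<inter> leaves y = {}" using assms by auto
  have sx: "is_shrub (leaves x) (PE x) (PH x)" "is_shrub (leaves y) (PE y) (PH y)"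
    using phi_shrub lx by blast+
  let ?X = "{{j, k} | j k. j \<in> leaves y \<and> PH y j = 0 \<and> k \<in> leaves x \<and> PH x k = 0}"
  have X: "{i,j} \<in> ?X \<longleftrightarrow> (i \<in> leaves y \<and> PH y i = 0 \<and> j \<in> leaves x \<and> PH x j = 0) \<or> (j \<in> leaves y \<and> PH y j = 0 \<and> i \<in> leaves x \<and> PH x i = 0)" for i j
    by (auto simp: doubleton_eq)
  show ?thesis
  proof
    assume "covers (PE (D x y)) (PH (D x y)) a b"
    then have e: "{b,a} \<in> PE x \<or> {b,a} \<in> PE y \<or> {b,a} \<in> ?X" and hh: "PH (D x y) a = PH (D x y) b + 1"
      unfolding covers_def by auto
    show "(a \<in> leaves x \<and> b \<in> leaves x \<and> covers (PE x) (PH x) a b) \<or> (a \<in> leaves y \<and> b \<in> leaves y \<and> covers (PE y) (PH y) a b)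
     \<or> (a \<in> leaves y \<and> PH y a = 0 \<and> b \<in> leaves x \<and> PH x b = 0)"
    proof (cases "{b,a} \<in> PE x")
      case True
      then have "a \<in> leaves x" "b \<in> leaves x" using edge_in[OF lx(1)] by blast+
      then have "a \<notin> leaves y" "b \<notin> leaves y" using dj by blast+
      then show ?thesis using True hh \<open>a \<in> leaves x\<close> \<open>b \<in> leaves x\<close> unfolding covers_def by simp
    next
      case False
      show ?thesis
      proof (cases "{b,a} \<in> PE y")
        case True
        then have "a \<in> leaves y" "b \<in> leaves y" using edge_in[OF lx(2)] by blast+
        then show ?thesis using True hh unfolding covers_def by simp
      next
        case F2: False
        then have "{b,a} \<in> ?X" using e False by blast
        then have "(b \<in> leaves y \<and> PH y b = 0 \<and> a \<in> leaves x \<and> PH x a = 0) \<or> (a \<in> leaves y \<and> PH y a = 0 \<and> b \<in> leaves x \<and> PH x b = 0)"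
          using X by blast
        then show ?thesis
        proof
          assume H: "b \<in> leaves y \<and> PH y b = 0 \<and> a \<in> leaves x \<and> PH x a = 0"
          then have "a \<notin> leaves y" using dj by blast
          then show ?thesis using hh H by simp
        qed blast
      qed
    qed
  next
    assume "(a \<in> leaves x \<and> b \<in> leaves x \<and> covers (PE x) (PH x) a b) \<or> (a \<in> leaves y \<and> b \<in> leaves y \<and> covers (PE y) (PH y) a b)
     \<or> (a \<in> leaves y \<and> PH y a = 0 \<and> b \<in> leaves x \<and> PH x b = 0)"
    then show "covers (PE (D x y)) (PH (D x y)) a b"
    proof (elim disjE)
      assume H: "a \<in> leaves x \<and> b \<in> leaves x \<and> covers (PE x) (PH x) a b"
      then have "a \<notin> leaves y" "b \<notin> leaves y" using dj by blast+
      then show ?thesis using H unfolding covers_def by simp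
    next
      assume "a \<in> leaves y \<and> b \<in> leaves y \<and> covers (PE y) (PH y) a b"
      then show ?thesis unfolding covers_def by simp
    next
      assume H: "a \<in> leaves y \<and> PH y a = 0 \<and> b \<in> leaves x \<and> PH x b = 0"
      then have "b \<notin> leaves y" using dj by blast
      moreover have "{b,a} \<in> ?X" using H X by blast
      ultimately show ?thesis using H unfolding covers_def PE_D by simp
    qed
  qed
qed

lemma restr_C:
  assumes "linear (C x y)"
  shows "PE x = {e \<in> PE (C x y). e \<subseteq> leaves x}" "PH x = (\<lambda>i. if i \<in> leaves x then PH (C x y) i else 0)"
    "PE y = {e \<in> PE (C x y). e \<subseteq> leaves y}" "PH y = (\<lambda>i. if i \<in> leaves y then PH (C x y) i else 0)"
proof -
  have lx: "linear x" "linear y" and dj: "leaves x \<inter> leaves y = {}" using assms by auto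
  show "PE x = {e \<in> PE (C x y). e \<subseteq> leaves x}"
  proof
    show "PE x \<subseteq> {e \<in> PE (C x y). e \<subseteq> leaves x}" using edge_sub[OF lx(1)] by auto
    show "{e \<in> PE (C x y). e \<subseteq> leaves x} \<subseteq> PE x"
    proof
      fix e assume e: "e \<in> {e \<in> PE (C x y). e \<subseteq> leaves x}"
      show "e \<in> PE x"
      proof (rule ccontr)
        assume "e \<notin> PE x"
        then have "e \<in> PE y" using e by simp
        then have "e \<subseteq> leaves y" "e \<noteq> {}" using edge_sub[OF lx(2)] by blast+
        then show False using e dj by blast
      qed
    qed
  qed
  show "PE y = {e \<in> PE (C x y). e \<subseteq> leaves y}"
  proof
    show "PE y \<subseteq> {e \<in> PE (C x y). e \<subseteq> leaves y}" using edge_sub[OF lx(2)] by auto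
    show "{e \<in> PE (C x y). e \<subseteq> leaves y} \<subseteq> PE y"
    proof
      fix e assume e: "e \<in> {e \<in> PE (C x y). e \<subseteq> leaves y}"
      show "e \<in> PE y"
      proof (rule ccontr)
        assume "e \<notin> PE y"
        then have "e \<in> PE x" using e by simp
        then have "e \<subseteq> leaves x" "e \<noteq> {}" using edge_sub[OF lx(1)] by blast+
        then show False using e dj by blast
      qed
    qed
  qed
  show "PH x = (\<lambda>i. if i \<in> leaves x then PH (C x y) i else 0)"
    using dj PH_out[of _ x] by (auto simp: fun_eq_iff)
  show "PH y = (\<lambda>i. if i \<in> leaves y then PH (C x y) i else 0)"
    using PH_out[of _ y] by (auto simp: fun_eq_iff)
qed

lemma restr_D:
  assumes "linear (D x y)"
  shows "PE x = {e \<in> PE (D x y). e \<subseteq> leaves x}" "PH x = (\<lambda>i. if i \<in> leaves x then PH (D x y) i else 0)"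
    "PE y = {e \<in> PE (D x y). e \<subseteq> leaves y}" "PH y = (\<lambda>i. if i \<in> leaves y then PH (D x y) i - 1 else 0)"
proof -
  have lx: "linear x" "linear y" and dj: "leaves x \<inter> leaves y = {}" using assms by auto
  let ?X = "{{j, k} | j k. j \<in> leaves y \<and> PH y j = 0 \<and> k \<in> leaves x \<and> PH x k = 0}"
  have Xx: "e \<in> ?X \<Longrightarrow> \<not> e \<subseteq> leaves x" for e using dj by auto
  have Xy: "e \<in> ?X \<Longrightarrow> \<not> e \<subseteq> leaves y" for e using dj by auto
  show "PE x = {e \<in> PE (D x y). e \<subseteq> leaves x}"
  proof
    show "PE x \<subseteq> {e \<in> PE (D x y). e \<subseteq> leaves x}" using edge_sub[OF lx(1)] by auto
    show "{e \<in> PE (D x y). e \<subseteq> leaves x} \<subseteq> PE x"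
    proof
      fix e assume e: "e \<in> {e \<in> PE (D x y). e \<subseteq> leaves x}"
      show "e \<in> PE x"
      proof (rule ccontr)
        assume "e \<notin> PE x"
        then have "e \<in> PE y \<or> e \<in> ?X" using e by simp
        then show False
        proof
          assume "e \<in> PE y"
          then have "e \<subseteq> leaves y" "e \<noteq> {}" using edge_sub[OF lx(2)] by blast+
          then show False using e dj by blast
        qed (use e Xx in blast)
      qed
    qed
  qed
  show "PE y = {e \<in> PE (D x y). e \<subseteq> leaves y}"
  proof
    show "PE y \<subseteq> {e \<in> PE (D x y). e \<subseteq> leaves y}" using edge_sub[OF lx(2)] by auto
    show "{e \<in> PE (D x y). e \<subseteq> leaves y} \<subseteq> PE y"
    proof
      fix e assume e: "e \<in> {e \<in> PE (D x y). e \<subseteq> leaves y}"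
      show "e \<in> PE y"
      proof (rule ccontr)
        assume "e \<notin> PE y"
        then have "e \<in> PE x \<or> e \<in> ?X" using e by simp
        then show False
        proof
          assume "e \<in> PE x"
          then have "e \<subseteq> leaves x" "e \<noteq> {}" using edge_sub[OF lx(1)] by blast+
          then show False using e dj by blast
        qed (use e Xy in blast)
      qed
    qed
  qed
  show "PH x = (\<lambda>i. if i \<in> leaves x then PH (D x y) i else 0)"
    using dj PH_out[of _ x] by (auto simp: fun_eq_iff)
  show "PH y = (\<lambda>i. if i \<in> leaves y then PH (D x y) i - 1 else 0)"
    using PH_out[of _ y] by (auto simp: fun_eq_iff)
qed



lemma closed_mono: "closed E J \<Longrightarrow> E' \<subseteq> E \<Longrightarrow> closed E' J"
  unfolding closed_def by blast

lemma closed_C: "closed (PE (C x y)) J \<Longrightarrow> closed (PE x) J \<and> closed (PE y) J"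
  using closed_mono by (metis PE_C Un_upper1 Un_upper2)

lemma closed_D: "closed (PE (D x y)) J \<Longrightarrow> closed (PE x) J \<and> closed (PE y) J"
proof -
  assume "closed (PE (D x y)) J"
  moreover have "PE x \<subseteq> PE (D x y)" "PE y \<subseteq> PE (D x y)" by auto
  ultimately show ?thesis using closed_mono by blast
qed

lemma Dedge: "j \<in> leaves y \<Longrightarrow> PH y j = 0 \<Longrightarrow> k \<in> leaves x \<Longrightarrow> PH x k = 0 \<Longrightarrow>
   {j,k} \<in> PE (D x y) \<and> {k,j} \<in> PE (D x y)"
  by (auto simp: insert_commute)

lemma closedD: "closed E J \<Longrightarrow> {i,j} \<in> E \<Longrightarrow> i \<in> J \<Longrightarrow> j \<in> J"
  unfolding closed_def by blast

lemma reach_root: "linear t \<Longrightarrow> closed (PE t) J \<Longrightarrow> J \<inter> leaves t \<noteq> {} \<Longrightarrow> J \<inter> roots t \<noteq> {}"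
proof (induction t)
  case (Leaf a) then show ?case by (simp add: roots_def)
next
  case (C x y)
  have cl: "closed (PE x) J" "closed (PE y) J" using closed_C[OF C.prems(2)] by blast+
  have "J \<inter> leaves x \<noteq> {} \<or> J \<inter> leaves y \<noteq> {}" using C.prems(3) by auto
  then have "J \<inter> roots x \<noteq> {} \<or> J \<inter> roots y \<noteq> {}" using C cl by auto
  then show ?case using roots_C[OF C.prems(1)] by blast
next
  case (D x y)
  have cl: "closed (PE x) J" "closed (PE y) J" using closed_D[OF D.prems(2)] by blast+
  have lx: "linear x" "linear y" using D.prems(1) by auto
  have "J \<inter> roots x \<noteq> {}"
  proof (cases "J \<inter> leaves x \<noteq> {}")
    case True then show ?thesis using D.IH(1) lx cl by blast
  next
    case False
    then have "J \<inter> leaves y \<noteq> {}" using D.prems(3) by auto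
    then obtain r where r: "r \<in> J" "r \<in> leaves y" "PH y r = 0" using D.IH(2) lx cl unfolding roots_def by blast
    obtain k where k: "k \<in> leaves x" "PH x k = 0" using root_ex[OF lx(1)] by blast
    have "k \<in> J" using closedD[OF D.prems(2) Dedge[OF r(2,3) k, THEN conjunct1] r(1)] .
    then show ?thesis using k unfolding roots_def by blast
  qed
  then show ?case using roots_D[OF D.prems(1)] by simp
qed

lemma roots_all: "linear t \<Longrightarrow> closed (PE t) J \<Longrightarrow> roots t \<subseteq> J \<Longrightarrow> leaves t \<subseteq> J"
proof (induction t)
  case (Leaf a) then show ?case by (simp add: roots_def)
next
  case (C x y)
  have cl: "closed (PE x) J" "closed (PE y) J" using closed_C[OF C.prems(2)] by blast+
  then show ?case using C roots_C[OF C.prems(1)] by auto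
next
  case (D x y)
  have cl: "closed (PE x) J" "closed (PE y) J" using closed_D[OF D.prems(2)] by blast+
  have lx: "linear x" "linear y" using D.prems(1) by auto
  have rx: "roots x \<subseteq> J" using D.prems(3) roots_D[OF D.prems(1)] by simp
  then have "leaves x \<subseteq> J" using D.IH(1) lx cl by blast
  obtain k where k: "k \<in> leaves x" "PH x k = 0" using root_ex[OF lx(1)] by blast
  have "k \<in> J" using rx k unfolding roots_def by blast
  have "roots y \<subseteq> J"
  proof
    fix r assume "r \<in> roots y"
    then have r: "r \<in> leaves y" "PH y r = 0" unfolding roots_def by auto
    show "r \<in> J" using closedD[OF D.prems(2) Dedge[OF r k, THEN conjunct2] \<open>k \<in> J\<close>] .
  qed
  then have "leaves y \<subseteq> J" using D.IH(2) lx cl by blast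
  then show ?case using \<open>leaves x \<subseteq> J\<close> by simp
qed

lemma D_connected:
  assumes lin: "linear (D x y)" and cl: "closed (PE (D x y)) J" and ne: "J \<inter> leaves (D x y) \<noteq> {}"
  shows "leaves (D x y) \<subseteq> J"
proof -
  have lx: "linear x" "linear y" using lin by auto
  obtain r0 where r0: "r0 \<in> J" "r0 \<in> roots x" using reach_root[OF lin cl ne] roots_D[OF lin] by blast
  obtain q where q: "q \<in> leaves y" "PH y q = 0" using root_ex[OF lx(2)] by blast
  have r0': "r0 \<in> leaves x" "PH x r0 = 0" using r0(2) unfolding roots_def by auto
  have "q \<in> J" using closedD[OF cl Dedge[OF q r0', THEN conjunct2] r0(1)] .
  have "roots x \<subseteq> J"
  proof
    fix k assume "k \<in> roots x"
    then have k: "k \<in> leaves x" "PH x k = 0" unfolding roots_def by auto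
    show "k \<in> J" using closedD[OF cl Dedge[OF q k, THEN conjunct1] \<open>q \<in> J\<close>] .
  qed
  then show ?thesis using roots_all[OF lin cl] roots_D[OF lin] by simp
qed

lemma eqA_C: "eqA a a' \<Longrightarrow> eqA b b' \<Longrightarrow> eqA (C a b) (C a' b')"
  by (meson eq_C1 eq_C2 eq_trans)
lemma eqA_D: "eqA a a' \<Longrightarrow> eqA b b' \<Longrightarrow> eqA (D a b) (D a' b')"
  by (meson eq_D1 eq_D2 eq_trans)
lemma eqA_assoc: "eqA (C (C a b) c) (C a (C b c))"
  by (meson eq_rel3 eq_Csym eq_trans)

lemma split_closed:
  "linear t \<Longrightarrow> closed (PE t) J \<Longrightarrow>
    leaves t \<subseteq> J \<or> leaves t \<inter> J = {} \<or>
    (\<exists>t1 t2. eqA t (C t1 t2) \<and> leaves t1 = leaves t \<inter> J \<and> leaves t2 = leaves t - J)"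
proof (induction t)
  case (Leaf a) then show ?case by auto
next
  case (D x y)
  then show ?case using D_connected[OF D.prems(1,2)] by blast
next
  case (C x y)
  have cl: "closed (PE x) J" "closed (PE y) J" using closed_C[OF C.prems(2)] by blast+
  have lx: "linear x" "linear y" and dj: "leaves x \<inter> leaves y = {}" using C.prems(1) by auto
  have hx: "leaves x \<subseteq> J \<or> leaves x \<inter> J = {} \<or>
    (\<exists>t1 t2. eqA x (C t1 t2) \<and> leaves t1 = leaves x \<inter> J \<and> leaves t2 = leaves x - J)"
    using C.IH(1) lx cl by blast
  have hy: "leaves y \<subseteq> J \<or> leaves y \<inter> J = {} \<or>
    (\<exists>t1 t2. eqA y (C t1 t2) \<and> leaves t1 = leaves y \<inter> J \<and> leaves t2 = leaves y - J)"
    using C.IH(2) lx cl by blast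
  let ?G = "\<exists>t1 t2. eqA (C x y) (C t1 t2) \<and> leaves t1 = leaves (C x y) \<inter> J \<and> leaves t2 = leaves (C x y) - J"
  from hx show ?case
  proof (elim disjE exE conjE)
    assume ax: "leaves x \<subseteq> J"
    from hy show ?thesis
    proof (elim disjE exE conjE)
      assume "leaves y \<subseteq> J" then show ?thesis using ax by simp
    next
      assume "leaves y \<inter> J = {}"
      then have ?G using ax by (intro exI[of _ x] exI[of _ y]) (auto intro: eq_refl)
      then show ?thesis by blast
    next
      fix y1 y2 assume "eqA y (C y1 y2)" "leaves y1 = leaves y \<inter> J" "leaves y2 = leaves y - J"
      moreover have "eqA (C x (C y1 y2)) (C (C x y1) y2)" by (meson eqA_assoc eq_sym)
      ultimately have "eqA (C x y) (C (C x y1) y2)" by (meson eqA_C eq_refl eq_trans)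
      then have ?G using ax \<open>leaves y1 = _\<close> \<open>leaves y2 = _\<close> by (intro exI[of _ "C x y1"] exI[of _ y2]) auto
      then show ?thesis by blast
    qed
  next
    assume ax: "leaves x \<inter> J = {}"
    from hy show ?thesis
    proof (elim disjE exE conjE)
      assume ay: "leaves y \<subseteq> J"
      have "eqA (C x y) (C y x)" by (rule eq_Csym)
      then have ?G using ax ay dj by (intro exI[of _ y] exI[of _ x]) auto
      then show ?thesis by blast
    next
      assume "leaves y \<inter> J = {}" then show ?thesis using ax by (simp add: Int_Un_distrib2)
    next
      fix y1 y2 assume "eqA y (C y1 y2)" "leaves y1 = leaves y \<inter> J" "leaves y2 = leaves y - J"
      have "eqA (C x (C y1 y2)) (C y1 (C y2 x))"
        by (meson eq_Csym eq_rel3 eq_trans)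
      then have "eqA (C x y) (C y1 (C y2 x))" using \<open>eqA y (C y1 y2)\<close> by (meson eqA_C eq_refl eq_trans)
      then have ?G using ax \<open>leaves y1 = _\<close> \<open>leaves y2 = _\<close> by (intro exI[of _ y1] exI[of _ "C y2 x"]) auto
      then show ?thesis by blast
    qed
  next
    fix x1 x2 assume ex: "eqA x (C x1 x2)" "leaves x1 = leaves x \<inter> J" "leaves x2 = leaves x - J"
    from hy show ?thesis
    proof (elim disjE exE conjE)
      assume ay: "leaves y \<subseteq> J"
      have "eqA (C (C x1 x2) y) (C (C x1 y) x2)"
        by (meson eqA_assoc eq_sym eq_Csym eq_C2 eq_trans)
      then have "eqA (C x y) (C (C x1 y) x2)" using ex(1) by (meson eqA_C eq_refl eq_trans)
      then have ?G using ay ex by (intro exI[of _ "C x1 y"] exI[of _ x2]) auto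
      then show ?thesis by blast
    next
      assume ay: "leaves y \<inter> J = {}"
      have "eqA (C (C x1 x2) y) (C x1 (C x2 y))" by (rule eqA_assoc)
      then have "eqA (C x y) (C x1 (C x2 y))" using ex(1) by (meson eqA_C eq_refl eq_trans)
      then have ?G using ay ex by (intro exI[of _ x1] exI[of _ "C x2 y"]) auto
      then show ?thesis by blast
    next
      fix y1 y2 assume ey: "eqA y (C y1 y2)" "leaves y1 = leaves y \<inter> J" "leaves y2 = leaves y - J"
      have s1: "eqA (C (C x1 x2) (C y1 y2)) (C x1 (C x2 (C y1 y2)))" by (rule eqA_assoc)
      have s2: "eqA (C x2 (C y1 y2)) (C y1 (C x2 y2))"
      proof -
        have "eqA (C x2 (C y1 y2)) (C (C x2 y1) y2)" by (meson eqA_assoc eq_sym)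
        moreover have "eqA (C (C x2 y1) y2) (C (C y1 x2) y2)" by (rule eq_C1[OF eq_Csym])
        moreover have "eqA (C (C y1 x2) y2) (C y1 (C x2 y2))" by (rule eqA_assoc)
        ultimately show ?thesis by (meson eq_trans)
      qed
      have s3: "eqA (C x1 (C y1 (C x2 y2))) (C (C x1 y1) (C x2 y2))" by (meson eqA_assoc eq_sym)
      have "eqA (C (C x1 x2) (C y1 y2)) (C (C x1 y1) (C x2 y2))"
        using s1 eq_C2[OF s2, of x1] s3 by (meson eq_trans)
      then have "eqA (C x y) (C (C x1 y1) (C x2 y2))" using ex(1) ey(1) by (meson eqA_C eq_trans)
      then have ?G using ex ey by (intro exI[of _ "C x1 y1"] exI[of _ "C x2 y2"]) auto
      then show ?thesis by blast
    qed
  qed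
qed

fun isD :: "'a tm \<Rightarrow> bool" where
  "isD (D _ _) = True" | "isD _ = False"

lemma D_norm: "linear (D x y) \<Longrightarrow> \<exists>x' y'. eqA (D x y) (D x' y') \<and> \<not> isD x'"
proof (induction x arbitrary: y)
  case (D p q)
  have e: "eqA (D (D p q) y) (D p (C y q))" by (rule eq_rel2)
  then have "linear (D p (C y q))" using eqA_sound[OF e] D.prems by blast
  then obtain x' y' where "eqA (D p (C y q)) (D x' y')" "\<not> isD x'" using D.IH(1) by blast
  then show ?case using e by (meson eq_trans)
next
  case (Leaf a) then show ?case by (intro exI[of _ "Leaf a"] exI[of _ y]) (auto intro: eq_refl)
next
  case (C p q) then show ?case by (intro exI[of _ "C p q"] exI[of _ y]) (auto intro: eq_refl)
qed



definition Ycan :: "'a set set \<Rightarrow> ('a \<Rightarrow> nat) \<Rightarrow> 'a set \<Rightarrow> 'a set" where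
  "Ycan E h I = {v \<in> I. 0 < h v \<and> Lv E h (\<lambda>_. False) (\<lambda>A. A = {k \<in> I. h k = 0}) (h v) v}"

lemma Ycan_D:
  assumes lin: "linear (D x y)" and nd: "\<not> isD x"
  shows "Ycan (PE (D x y)) (PH (D x y)) (leaves (D x y)) = leaves y"
proof -
  have lx: "linear x" "linear y" and dj: "leaves x \<inter> leaves y = {}" using lin by auto
  define E where "E = PE (D x y)"
  define h where "h = PH (D x y)"
  define R where "R = {k \<in> leaves (D x y). h k = 0}"
  define P where "P = Lv E h (\<lambda>_. False) (\<lambda>A. A = R)"
  have cov: "covers E h a b \<longleftrightarrow>
     (a \<in> leaves x \<and> b \<in> leaves x \<and> covers (PE x) (PH x) a b) \<or> (a \<in> leaves y \<and> b \<in> leaves y \<and> covers (PE y) (PH y) a b)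
     \<or> (a \<in> leaves y \<and> PH y a = 0 \<and> b \<in> leaves x \<and> PH x b = 0)" for a b
    unfolding E_def h_def by (rule covers_D_iff[OF lin])
  have hx: "v \<in> leaves x \<Longrightarrow> h v = PH x v" for v using dj unfolding h_def by auto
  have hy: "v \<in> leaves y \<Longrightarrow> h v = PH y v + 1" for v unfolding h_def by auto
  have R: "R = {k \<in> leaves x. PH x k = 0}" unfolding R_def using hx hy by auto
  have d1: "\<forall>v. v \<in> leaves y \<longrightarrow> PH y v = n \<longrightarrow> P (Suc n) v" for n
  proof (induction n)
    case 0
    show ?case
    proof (intro allI impI)
      fix v assume v: "v \<in> leaves y" "PH y v = 0"
      have "ch E h v = R"
      proof
        show "ch E h v \<subseteq> R"
        proof
          fix b assume "b \<in> ch E h v"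
          then have "covers E h v b" unfolding ch_def by simp
          then have "(v \<in> leaves y \<and> b \<in> leaves y \<and> covers (PE y) (PH y) v b) \<or> (b \<in> leaves x \<and> PH x b = 0)"
            using cov dj v(1) by blast
          then show "b \<in> R" using v(2) covers_h[of "PE y" "PH y" v b] R by auto
        qed
        show "R \<subseteq> ch E h v" using cov v R unfolding ch_def by auto
      qed
      then show "P (Suc 0) v" unfolding P_def by simp
    qed
  next
    case (Suc m)
    show ?case
    proof (intro allI impI)
      fix v assume v: "v \<in> leaves y" "PH y v = Suc m"
      have "P (Suc m) c" if "covers E h v c" for c
      proof -
        have "c \<in> leaves y \<and> covers (PE y) (PH y) v c" using cov[of v c] that v dj by auto
        then have "c \<in> leaves y" "PH y c = m" using covers_h[of "PE y" "PH y" v c] v(2) by auto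
        then show ?thesis using Suc.IH by blast
      qed
      then show "P (Suc (Suc m)) v" unfolding P_def by simp
    qed
  qed
  have Sx: "is_shrub (leaves x) (PE x) (PH x)" using phi_shrub lx(1) by blast
  have d2: "\<forall>v. v \<in> leaves x \<longrightarrow> PH x v = Suc n \<longrightarrow> \<not> P (Suc n) v" for n
  proof (induction n)
    case 0
    show ?case
    proof (intro allI impI)
      fix v assume v: "v \<in> leaves x" "PH x v = Suc 0"
      have "ch E h v \<noteq> R"
      proof (cases x)
        case (Leaf a) then show ?thesis using v by simp
      next
        case (D p q) then show ?thesis using nd by simp
      next
        case (C u w)
        have lu: "linear (C u w)" using lx(1) C by simp
        then have duw: "leaves u \<inter> leaves w = {}" "linear u" "linear w" by auto
        have "v \<in> leaves u \<or> v \<in> leaves w" using v(1) C by simp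
        then obtain r where r: "r \<in> R" "\<not> covers (PE x) (PH x) v r"
        proof
          assume vu: "v \<in> leaves u"
          obtain r where r: "r \<in> leaves w" "PH w r = 0" using root_ex[OF duw(3)] by blast
          have "r \<in> R" using r C R by simp
          moreover have "\<not> covers (PE x) (PH x) v r" using covers_C_iff[OF lu, of v r] vu r duw(1) C by blast
          ultimately show ?thesis using that by blast
        next
          assume vw: "v \<in> leaves w"
          obtain r where r: "r \<in> leaves u" "PH u r = 0" using root_ex[OF duw(2)] by blast
          have "r \<notin> leaves w" using r duw(1) by blast
          then have "r \<in> R" using r C R by simp
          moreover have "\<not> covers (PE x) (PH x) v r" using covers_C_iff[OF lu, of v r] vw r duw(1) C by blast
          ultimately show ?thesis using that by blast
        qed
        have "r \<notin> ch E h v" using r(2) cov[of v r] v(1) dj unfolding ch_def by blast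
        then show ?thesis using r(1) by blast
      qed
      then show "\<not> P (Suc 0) v" unfolding P_def by simp
    qed
  next
    case (Suc m)
    show ?case
    proof (intro allI impI)
      fix v assume v: "v \<in> leaves x" "PH x v = Suc (Suc m)"
      obtain c where c: "covers (PE x) (PH x) v c" using sh_cov[OF Sx v(1)] v(2) by auto
      have cx: "c \<in> leaves x" using sh_covers_in[OF Sx c] by blast
      have "PH x c = Suc m" using covers_h[OF c] v(2) by simp
      then have "\<not> P (Suc m) c" using Suc.IH cx by blast
      moreover have "covers E h v c" using cov c v(1) cx by blast
      ultimately show "\<not> P (Suc (Suc m)) v" unfolding P_def by auto
    qed
  qed
  have "Ycan E h (leaves (D x y)) = leaves y"
  proof
    show "Ycan E h (leaves (D x y)) \<subseteq> leaves y"
    proof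
      fix v assume "v \<in> Ycan E h (leaves (D x y))"
      then have v: "v \<in> leaves x \<or> v \<in> leaves y" "0 < h v" "P (h v) v"
        unfolding Ycan_def P_def R_def by auto
      show "v \<in> leaves y"
      proof (rule ccontr)
        assume "v \<notin> leaves y"
        then have vx: "v \<in> leaves x" using v(1) by blast
        then obtain n where n: "PH x v = Suc n" using v(2) hx gr0_implies_Suc by metis
        then show False using d2 vx v(3) hx[OF vx] by simp
      qed
    qed
    show "leaves y \<subseteq> Ycan E h (leaves (D x y))"
    proof
      fix v assume vy: "v \<in> leaves y"
      then have "P (Suc (PH y v)) v" using d1 by blast
      then show "v \<in> Ycan E h (leaves (D x y))" using hy[OF vy] vy unfolding Ycan_def P_def R_def by simp
    qed
  qed
  then show ?thesis unfolding E_def h_def .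
qed



lemma two_ne: "A \<union> B = {a} \<Longrightarrow> A \<inter> B = {} \<Longrightarrow> A \<noteq> {} \<Longrightarrow> B \<noteq> {} \<Longrightarrow> False"
proof -
  assume H: "A \<union> B = {a}" "A \<inter> B = {}" "A \<noteq> {}" "B \<noteq> {}"
  then obtain p q where "p \<in> A" "q \<in> B" by blast
  then have "p = a" "q = a" using H(1) by blast+
  then show False using H(2) \<open>p \<in> A\<close> \<open>q \<in> B\<close> by blast
qed

lemma single_leaf: "linear t \<Longrightarrow> leaves t = {a} \<Longrightarrow> t = Leaf a"
proof (cases t)
  case (C x y)
  assume "linear t" "leaves t = {a}"
  then have "leaves x \<union> leaves y = {a}" "leaves x \<inter> leaves y = {}" using C by auto
  then show ?thesis using two_ne leaves_ne by metis
next
  case (D x y)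
  assume "linear t" "leaves t = {a}"
  then have "leaves x \<union> leaves y = {a}" "leaves x \<inter> leaves y = {}" using D by auto
  then show ?thesis using two_ne leaves_ne by metis
qed simp

lemma C_closed:
  assumes "linear (C x y)"
  shows "closed (PE (C x y)) (leaves x) \<and> leaves x \<inter> leaves (C x y) \<noteq> {} \<and> \<not> leaves (C x y) \<subseteq> leaves x"
proof -
  have lx: "linear x" "linear y" and dj: "leaves x \<inter> leaves y = {}" using assms by auto
  have "closed (PE (C x y)) (leaves x)" unfolding closed_def
  proof (intro allI impI)
    fix i j assume ij: "{i,j} \<in> PE (C x y)" "i \<in> leaves x"
    show "j \<in> leaves x"
    proof (cases "{i,j} \<in> PE x")
      case True then show ?thesis using edge_in[OF lx(1), of i j] by blast
    next
      case False
      then have "{i,j} \<in> PE y" using ij(1) by simp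
      then have "i \<in> leaves y" using edge_in[OF lx(2), of i j] by blast
      then show ?thesis using ij(2) dj by blast
    qed
  qed
  moreover have "\<not> leaves (C x y) \<subseteq> leaves x"
  proof
    assume H: "leaves (C x y) \<subseteq> leaves x"
    obtain z where "z \<in> leaves y" using leaves_ne[of y] by blast
    then show False using H dj by auto
  qed
  ultimately show ?thesis using leaves_ne[of x] by auto
qed

lemma phi_eq_split: "phi a = phi b \<longleftrightarrow> PE a = PE b \<and> PH a = PH b"
  by (simp add: prod_eq_iff)

lemma inj_phi:
  "linear s \<Longrightarrow> linear t \<Longrightarrow> leaves s = leaves t \<Longrightarrow> phi s = phi t \<Longrightarrow> eqA s t"
proof (induction "card (leaves s)" arbitrary: s t rule: less_induct)
  case less
  note ls = less.prems(1) and lt = less.prems(2) and lv = less.prems(3) and ph = less.prems(4)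
  have IH: "eqA s' t'" if "leaves s' \<subset> leaves s" "linear s'" "linear t'" "leaves s' = leaves t'" "phi s' = phi t'" for s' t'
    using less.hyps[of s'] that psubset_card_mono[OF finite_leaves that(1)] by blast
  have PEst: "PE s = PE t" and PHst: "PH s = PH t" using ph by (simp_all add: phi_eq_split)
  show ?case
  proof (cases "\<exists>J. closed (PE s) J \<and> J \<inter> leaves s \<noteq> {} \<and> \<not> leaves s \<subseteq> J")
    case True
    then obtain J where J: "closed (PE s) J" "J \<inter> leaves s \<noteq> {}" "\<not> leaves s \<subseteq> J" by blast
    obtain s1 s2 where es: "eqA s (C s1 s2)" "leaves s1 = leaves s \<inter> J" "leaves s2 = leaves s - J"
      using split_closed[OF ls J(1)] J(2,3) by blast
    have Jt: "closed (PE t) J" using J(1) PEst by simp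
    obtain t1 t2 where et: "eqA t (C t1 t2)" "leaves t1 = leaves t \<inter> J" "leaves t2 = leaves t - J"
      using split_closed[OF lt Jt] J(2,3) lv by auto
    have ss: "linear (C s1 s2)" "phi (C s1 s2) = phi s" using eqA_sound[OF es(1)] ls by auto
    have tt: "linear (C t1 t2)" "phi (C t1 t2) = phi t" using eqA_sound[OF et(1)] lt by auto
    have L1: "leaves s1 = leaves t1" "leaves s2 = leaves t2" using es et lv by auto
    have PP: "PE (C s1 s2) = PE (C t1 t2)" "PH (C s1 s2) = PH (C t1 t2)"
      using ss(2) tt(2) ph by (simp_all add: phi_eq_split)
    have p1: "phi s1 = phi t1" unfolding phi_eq_split
      apply (rule conjI)
       apply (subst restr_C(1)[OF ss(1)], subst restr_C(1)[OF tt(1)], simp only: PP L1)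
      apply (subst restr_C(2)[OF ss(1)], subst restr_C(2)[OF tt(1)], simp only: PP L1)
      done
    have p2: "phi s2 = phi t2" unfolding phi_eq_split
      apply (rule conjI)
       apply (subst restr_C(3)[OF ss(1)], subst restr_C(3)[OF tt(1)], simp only: PP L1)
      apply (subst restr_C(4)[OF ss(1)], subst restr_C(4)[OF tt(1)], simp only: PP L1)
      done
    have lin: "linear s1" "linear s2" "linear t1" "linear t2" using ss(1) tt(1) by auto
    have "leaves s1 \<subset> leaves s" using es(2) J(3) by blast
    then have e1: "eqA s1 t1" using IH lin L1 p1 by blast
    have "leaves s2 \<subset> leaves s" using es(3) J(2) by blast
    then have e2: "eqA s2 t2" using IH lin L1 p2 by blast
    have "eqA (C s1 s2) (C t1 t2)" using eqA_C[OF e1 e2] .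
    then show ?thesis using es(1) et(1) by (meson eq_sym eq_trans)
  next
    case False
    note noJ = False
    show ?thesis
    proof (cases s)
      case (Leaf a)
      then have "t = Leaf a" using single_leaf[OF lt] lv by simp
      then show ?thesis using Leaf by (simp add: eq_refl)
    next
      case (C x y)
      have "linear (C x y)" using ls C by simp
      from C_closed[OF this] have "\<exists>J. closed (PE s) J \<and> J \<inter> leaves s \<noteq> {} \<and> \<not> leaves s \<subseteq> J"
        unfolding C by blast
      then show ?thesis using noJ by blast
    next
      case (D x y)
      have tD: "\<exists>x2 y2. t = D x2 y2"
      proof (cases t)
        case (Leaf a)
        then have "s = Leaf a" using single_leaf[OF ls] lv by simp
        then show ?thesis using D by simp
      next
        case (C x2 y2)
        have "linear (C x2 y2)" using lt C by simp
        from C_closed[OF this] have "closed (PE t) (leaves x2) \<and> leaves x2 \<inter> leaves t \<noteq> {} \<and> \<not> leaves t \<subseteq> leaves x2"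
          unfolding C by blast
        then have "closed (PE s) (leaves x2) \<and> leaves x2 \<inter> leaves s \<noteq> {} \<and> \<not> leaves s \<subseteq> leaves x2"
          using PEst lv by simp
        then show ?thesis using noJ by blast
      qed simp
      obtain a b where ab: "eqA s (D a b)" "\<not> isD a" using D_norm[of x y] ls D by blast
      obtain c d where cd: "eqA t (D c d)" "\<not> isD c" using D_norm tD lt by blast
      have ss: "linear (D a b)" "phi (D a b) = phi s" "leaves (D a b) = leaves s" using eqA_sound[OF ab(1)] ls by auto
      have tt: "linear (D c d)" "phi (D c d) = phi t" "leaves (D c d) = leaves t" using eqA_sound[OF cd(1)] lt by auto
      have PP: "PE (D a b) = PE (D c d)" "PH (D a b) = PH (D c d)"
        using ss(2) tt(2) ph by (simp_all add: phi_eq_split)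
      have Lbd: "leaves b = leaves d"
      proof -
        have "leaves b = Ycan (PE (D a b)) (PH (D a b)) (leaves (D a b))" using Ycan_D[OF ss(1) ab(2)] by simp
        also have "\<dots> = Ycan (PE (D c d)) (PH (D c d)) (leaves (D c d))" using PP ss(3) tt(3) lv by simp
        also have "\<dots> = leaves d" using Ycan_D[OF tt(1) cd(2)] .
        finally show ?thesis .
      qed
      have Lac: "leaves a = leaves c"
      proof -
        have "leaves a = leaves s - leaves b" using ss(1) ss(3) by auto
        moreover have "leaves c = leaves t - leaves d" using tt(1) tt(3) by auto
        ultimately show ?thesis using Lbd lv by simp
      qed
      have p1: "phi a = phi c" unfolding phi_eq_split
        apply (rule conjI)
         apply (subst restr_D(1)[OF ss(1)], subst restr_D(1)[OF tt(1)], simp only: PP Lac)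
        apply (subst restr_D(2)[OF ss(1)], subst restr_D(2)[OF tt(1)], simp only: PP Lac)
        done
      have p2: "phi b = phi d" unfolding phi_eq_split
        apply (rule conjI)
         apply (subst restr_D(3)[OF ss(1)], subst restr_D(3)[OF tt(1)], simp only: PP Lbd)
        apply (subst restr_D(4)[OF ss(1)], subst restr_D(4)[OF tt(1)], simp only: PP Lbd)
        done
      have lin: "linear a" "linear b" "linear c" "linear d" using ss(1) tt(1) by auto
      have dab: "leaves a \<inter> leaves b = {}" using ss(1) by auto
      have sab: "leaves s = leaves a \<union> leaves b" using ss(3) by simp
      obtain zb where zb: "zb \<in> leaves b" using leaves_ne[of b] by blast
      obtain za where za: "za \<in> leaves a" using leaves_ne[of a] by blast
      have "leaves a \<subset> leaves s" using sab dab zb by blast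
      then have e1: "eqA a c" using IH lin Lac p1 by blast
      have "leaves b \<subset> leaves s" using sab dab za by blast
      then have e2: "eqA b d" using IH lin Lbd p2 by blast
      have "eqA (D a b) (D c d)" using eqA_D[OF e1 e2] .
      then show ?thesis using ab(1) cd(1) by (meson eq_sym eq_trans)
    qed
  qed
qed

theorem mainTheorem7:
  shows "(\<forall>t :: 'a tm. linear t \<longrightarrow> is_shrub (leaves t) (fst (phi t)) (snd (phi t)))
       \<and> (\<forall>s t :: 'a tm. linear s \<longrightarrow> linear t \<longrightarrow> leaves s = leaves t \<longrightarrow>
            (eqA s t \<longleftrightarrow> phi s = phi t))
       \<and> (\<forall>(I :: 'a set) E h. finite I \<longrightarrow> I \<noteq> {} \<longrightarrow> is_shrub I E h \<longrightarrow>
            (\<exists>t. linear t \<and> leaves t = I \<and> phi t = (E, h)))"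
proof (intro conjI allI impI)
  fix t :: "'a tm" assume "linear t" then show "is_shrub (leaves t) (fst (phi t)) (snd (phi t))" by (rule phi_shrub)
next
  fix s t :: "'a tm" assume "linear s" "linear t" "leaves s = leaves t"
  note H = this
  show "eqA s t \<longleftrightarrow> phi s = phi t"
  proof
    assume "eqA s t" then show "phi s = phi t" using eqA_sound[of s t] H(1) by blast
  next
    assume "phi s = phi t" then show "eqA s t" using inj_phi[OF H] by blast
  qed
next
  fix I :: "'a set" and E h assume "finite I" "I \<noteq> {}" "is_shrub I E h"
  then show "\<exists>t. linear t \<and> leaves t = I \<and> phi t = (E, h)" by (rule surj_shrub)
qed


end
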